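(* Let $(\mathsf{X},\mu)$, $(\mathsf{Y},\nu)$ be Polish probability spaces, $c:\mathsf{X}\times\mathsf{Y}\to[0,\infty)$ continuous, $\pi_\varepsilon$ the $(c,\varepsilon)$-cyclically invariant coupling for each $\varepsilon>0$ (assumed to exist), and assume $\pi_\varepsilon\to\pi_*$ weakly as $\varepsilon\to0$ for some $\pi_*\in\Pi(\mu,\nu)$. Let $\Gamma:=\operatorname{spt}\pi_*$, $\mathsf{X}_0:=\operatorname{proj}_{\mathsf{X}}\Gamma$, $\mathsf{Y}_0:=\operatorname{proj}_{\mathsf{Y}}\Gamma$, and assume that for any $c$-convex functions $\psi_1,\psi_2$ on $\mathsf{X}$ with $\Gamma\subset\partial_c\psi_i$ ($i=1,2$), $\psi_1-\psi_2$ is constant on $\mathsf{X}_0$. Then for any open set $U\subset\mathsf{X}_0\times\mathsf{Y}_0$, $$\liminf_{\varepsilon\to0}\varepsilon\log\pi_\varepsilon(U)\ge-\inf_{(x,y)\in U}I(x,y).$$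
   Context: $\Pi(\mu,\nu)$ is the set of couplings of $\mu,\nu$ and $P:=\mu\otimes\nu$. A coupling $\pi$ is $(c,\varepsilon)$-cyclically invariant if $\pi\sim P$ and its density admits a version $\frac{d\pi}{dP}:\mathsf{X}\times\mathsf{Y}\to(0,\infty)$ with $\prod_{i=1}^k\frac{d\pi}{dP}(x_i,y_i)=\exp\big(-\frac1\varepsilon[\sum_{i=1}^k c(x_i,y_i)-\sum_{i=1}^k c(x_i,y_{i+1})]\big)\prod_{i=1}^k\frac{d\pi}{dP}(x_i,y_{i+1})$ for all $k$ and points, $y_{k+1}:=y_1$. A proper $\psi:\mathsf{X}\to(-\infty,\infty]$ is $c$-convex if $\psi(x)=\sup_{y}[\zeta(y)-c(x,y)]$ for some $\zeta:\mathsf{Y}\to[-\infty,\infty]$; $\psi^c(y):=\inf_x[\psi(x)+c(x,y)]$ and $\partial_c\psi=\{(x,y):\psi^c(y)-\psi(x)=c(x,y)\}$. The function $I$ is $I(x,y):=\sup_{k\ge2}\sup_{(x_i,y_i)_{i=2}^k\subset\Gamma}\sup_{\sigma\in\Sigma(k)}\sum_{i=1}^k c(x_i,y_i)-\sum_{i=1}^k c(x_i,y_{\sigma(i)})$ with $(x_1,y_1):=(x,y)$ and $\Sigma(k)$ the permutations of $\{1,\dots,k\}$. Topology on $\mathsf{X}_0\times\mathsf{Y}_0$ is the relative one. *)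

theory Defs
  imports "HOL-Probability.Probability"
begin

definition coupling :: "'a measure \<Rightarrow> 'b measure \<Rightarrow> ('a \<times> 'b) measure \<Rightarrow> bool" where
  "coupling \<mu> \<nu> \<pi> \<longleftrightarrow> prob_space \<pi> \<and> sets \<pi> = sets (\<mu> \<Otimes>\<^sub>M \<nu>) \<and>
     distr \<pi> \<mu> fst = \<mu> \<and> distr \<pi> \<nu> snd = \<nu>"

definition cyc_inv_coupling ::
  "('a \<Rightarrow> 'b \<Rightarrow> real) \<Rightarrow> real \<Rightarrow> 'a measure \<Rightarrow> 'b measure \<Rightarrow> ('a \<times> 'b) measure \<Rightarrow> bool" where
  "cyc_inv_coupling c \<epsilon> \<mu> \<nu> \<pi> \<longleftrightarrow> coupling \<mu> \<nu> \<pi> \<and>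
     absolutely_continuous (\<mu> \<Otimes>\<^sub>M \<nu>) \<pi> \<and> absolutely_continuous \<pi> (\<mu> \<Otimes>\<^sub>M \<nu>) \<and>
     (\<exists>f :: 'a \<times> 'b \<Rightarrow> real. f \<in> borel_measurable (\<mu> \<Otimes>\<^sub>M \<nu>) \<and> (\<forall>z. 0 < f z) \<and>
        \<pi> = density (\<mu> \<Otimes>\<^sub>M \<nu>) (\<lambda>z. ennreal (f z)) \<and>
        (\<forall>(k::nat) (x::nat \<Rightarrow> 'a) (y::nat \<Rightarrow> 'b). k \<ge> 1 \<longrightarrow>
           (\<Prod>i<k. f (x i, y i)) =
             exp (- (1 / \<epsilon>) * ((\<Sum>i<k. c (x i) (y i)) - (\<Sum>i<k. c (x i) (y ((i + 1) mod k)))))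
             * (\<Prod>i<k. f (x i, y ((i + 1) mod k)))))"

definition weak_conv_filter :: "('i \<Rightarrow> 'a::topological_space measure) \<Rightarrow> 'a measure \<Rightarrow> 'i filter \<Rightarrow> bool" where
  "weak_conv_filter M M0 F \<longleftrightarrow>
     (\<forall>g :: 'a \<Rightarrow> real. continuous_on UNIV g \<and> bounded (range g) \<longrightarrow>
        ((\<lambda>i. integral\<^sup>L (M i) g) \<longlongrightarrow> integral\<^sup>L M0 g) F)"

definition msupport :: "'a::topological_space measure \<Rightarrow> 'a set" where
  "msupport M = {z. \<forall>U. open U \<and> z \<in> U \<longrightarrow> emeasure M U > 0}"

definition c_convex :: "('a \<Rightarrow> 'b \<Rightarrow> real) \<Rightarrow> ('a \<Rightarrow> ereal) \<Rightarrow> bool" where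
  "c_convex c \<psi> \<longleftrightarrow> (\<forall>x. \<psi> x \<noteq> -\<infinity>) \<and> (\<exists>x. \<psi> x \<noteq> \<infinity>) \<and>
     (\<exists>\<zeta> :: 'b \<Rightarrow> ereal. \<forall>x. \<psi> x = (SUP y. \<zeta> y - ereal (c x y)))"

definition c_transform :: "('a \<Rightarrow> 'b \<Rightarrow> real) \<Rightarrow> ('a \<Rightarrow> ereal) \<Rightarrow> 'b \<Rightarrow> ereal" where
  "c_transform c \<psi> y = (INF x. \<psi> x + ereal (c x y))"

text \<open>c-subdifferential; psi x is required finite so that the difference is meaningful.\<close>
definition c_subdiff :: "('a \<Rightarrow> 'b \<Rightarrow> real) \<Rightarrow> ('a \<Rightarrow> ereal) \<Rightarrow> ('a \<times> 'b) set" where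
  "c_subdiff c \<psi> = {(x, y). \<psi> x \<noteq> \<infinity> \<and> c_transform c \<psi> y - \<psi> x = ereal (c x y)}"

definition rate_I :: "('a \<Rightarrow> 'b \<Rightarrow> real) \<Rightarrow> ('a \<times> 'b) set \<Rightarrow> 'a \<Rightarrow> 'b \<Rightarrow> ereal" where
  "rate_I c \<Gamma> x y = (SUP t \<in> {(k, xs, ys, \<sigma>) | (k::nat) (xs::nat \<Rightarrow> 'a) (ys::nat \<Rightarrow> 'b) \<sigma>.
        k \<ge> 2 \<and> xs 0 = x \<and> ys 0 = y \<and> (\<forall>i\<in>{1..<k}. (xs i, ys i) \<in> \<Gamma>) \<and> \<sigma> permutes {..<k}}.
     (case t of (k, xs, ys, \<sigma>) \<Rightarrow>
        ereal ((\<Sum>i<k. c (xs i) (ys i)) - (\<Sum>i<k. c (xs i) (ys (\<sigma> i))))))"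

definition eln :: "ennreal \<Rightarrow> ereal" where
  "eln t = (if t = 0 then -\<infinity> else if t = \<top> then \<infinity> else ereal (ln (enn2real t)))"

end

theory Submission
  imports Defs
begin

definition sg :: "nat \<Rightarrow> nat \<Rightarrow> nat" where
  "sg k j = (if j = 0 then k - 1 else if j < k then j - 1 else j)"

lemma sg_permutes: assumes "k \<ge> 1" shows "sg k permutes {..<k}"
proof (rule bij_imp_permutes)
  show "bij_betw (sg k) {..<k} {..<k}"
    by (rule bij_betw_byWitness[where f'="\<lambda>y. if y = k - 1 then 0 else y + 1"])
       (use assms in \<open>auto simp: sg_def\<close>)
  show "\<And>x. x \<notin> {..<k} \<Longrightarrow> sg k x = x" using assms by (auto simp: sg_def)
qed

definition CM :: "('a \<Rightarrow> 'b \<Rightarrow> real) \<Rightarrow> ('a \<times> 'b) set \<Rightarrow> bool" where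
  "CM c G \<longleftrightarrow> (\<forall>k X Y. k \<ge> 1 \<longrightarrow> (\<forall>j<k. (X j, Y j) \<in> G) \<longrightarrow>
      (\<Sum>j<k. c (X j) (Y j)) \<le> (\<Sum>j<k. c (X j) (Y (sg k j))))"

definition chT :: "('a \<Rightarrow> 'b \<Rightarrow> real) \<Rightarrow> nat \<Rightarrow> (nat \<Rightarrow> 'a) \<Rightarrow> (nat \<Rightarrow> 'b) \<Rightarrow> real" where
  "chT c n xs ys = (\<Sum>i<n. c (xs i) (ys i) - c (xs (Suc i)) (ys i)) + c (xs n) (ys n)"

definition chainsE :: "('a \<times> 'b) set \<Rightarrow> 'a \<Rightarrow> 'b \<Rightarrow> 'b \<Rightarrow> (nat \<times> (nat \<Rightarrow> 'a) \<times> (nat \<Rightarrow> 'b)) set" where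
  "chainsE G a b y = {(n, xs, ys). xs 0 = a \<and> ys 0 = b \<and> (\<forall>i\<le>n. (xs i, ys i) \<in> G) \<and> ys n = y}"

definition zeta :: "('a \<Rightarrow> 'b \<Rightarrow> real) \<Rightarrow> ('a \<times> 'b) set \<Rightarrow> 'a \<Rightarrow> 'b \<Rightarrow> 'b \<Rightarrow> ereal" where
  "zeta c G a b y = (SUP t \<in> chainsE G a b y. ereal (case t of (n, xs, ys) \<Rightarrow> chT c n xs ys))"

definition Psi :: "('a \<Rightarrow> 'b \<Rightarrow> real) \<Rightarrow> ('a \<times> 'b) set \<Rightarrow> 'a \<Rightarrow> 'b \<Rightarrow> 'a \<Rightarrow> ereal" where
  "Psi c G a b x = (SUP y. zeta c G a b y - ereal (c x y))"

lemma ext_sum: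
  fixes c :: "'a \<Rightarrow> 'b \<Rightarrow> real" and n :: nat and xs :: "nat \<Rightarrow> 'a" and x' :: 'a
    and ys :: "nat \<Rightarrow> 'b" and y' :: 'b
  defines "X \<equiv> \<lambda>j. if j \<le> n then xs j else x'" and "Y \<equiv> \<lambda>j. if j \<le> n then ys j else y'"
  shows "(\<Sum>j<Suc (Suc n). c (X j) (Y j)) - (\<Sum>j<Suc (Suc n). c (X j) (Y (sg (Suc (Suc n)) j)))
     = chT c n xs ys - c x' (ys n) + c x' y' - c (xs 0) y'"
proof -
  have 1: "(\<Sum>j<Suc (Suc n). c (X j) (Y j)) = (\<Sum>i<n. c (xs i) (ys i)) + c (xs n) (ys n) + c x' y'"
    by (simp add: X_def Y_def)
  have 2: "(\<Sum>j<Suc (Suc n). c (X j) (Y (sg (Suc (Suc n)) j))) =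
      c (xs 0) y' + ((\<Sum>i<n. c (xs (Suc i)) (ys i)) + c x' (ys n))"
  proof -
    have "(\<Sum>j<Suc (Suc n). c (X j) (Y (sg (Suc (Suc n)) j))) =
        c (X 0) (Y (Suc n)) + (\<Sum>i<Suc n. c (X (Suc i)) (Y i))"
      unfolding sum.lessThan_Suc_shift by (simp add: sg_def)
    also have "(\<Sum>i<Suc n. c (X (Suc i)) (Y i)) = (\<Sum>i<n. c (xs (Suc i)) (ys i)) + c x' (ys n)"
      by (simp add: X_def Y_def)
    finally show ?thesis by (simp add: X_def Y_def)
  qed
  show ?thesis unfolding 1 2 chT_def sum_subtractf by simp
qed

lemma ereal_minus_le_real: "e \<le> ereal (s + r) \<Longrightarrow> e - ereal r \<le> ereal s"
  by (cases e) auto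

lemma ereal_le_minus_real: "ereal (s + r) \<le> e \<Longrightarrow> ereal s \<le> e - ereal r"
  by (cases e) auto

context
  fixes c :: "'a \<Rightarrow> 'b \<Rightarrow> real" and G :: "('a \<times> 'b) set" and a :: 'a and b :: 'b
  assumes ab: "(a, b) \<in> G" and cm: "CM c G"
begin

lemma triv_chain: "(0, \<lambda>_. a, \<lambda>_. b) \<in> chainsE G a b b"
  using ab by (auto simp: chainsE_def)

lemma zeta_ge: "t \<in> chainsE G a b y \<Longrightarrow> ereal (case t of (n, xs, ys) \<Rightarrow> chT c n xs ys) \<le> zeta c G a b y"
  unfolding zeta_def by (rule SUP_upper)

lemma Psi_ge: "ereal (c a b - c x b) \<le> Psi c G a b x"
proof -
  have "ereal (c a b) \<le> zeta c G a b b"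
    using zeta_ge[OF triv_chain] by (simp add: chT_def)
  hence "ereal (c a b - c x b) \<le> zeta c G a b b - ereal (c x b)"
    by (intro ereal_le_minus_real) simp
  also have "\<dots> \<le> Psi c G a b x" unfolding Psi_def by (rule SUP_upper) simp
  finally show ?thesis .
qed

lemma chain_bound:
  assumes "(n, xs, ys) \<in> chainsE G a b y" "(x', y') \<in> G"
  shows "chT c n xs ys \<le> c a y' - c x' y' + c x' y"
proof -
  define X where "X \<equiv> \<lambda>j. if j \<le> n then xs j else x'"
  define Y where "Y \<equiv> \<lambda>j. if j \<le> n then ys j else y'"
  have "(\<Sum>j<Suc (Suc n). c (X j) (Y j)) \<le> (\<Sum>j<Suc (Suc n). c (X j) (Y (sg (Suc (Suc n)) j)))"
    using cm assms unfolding CM_def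
    by (elim allE[of _ "Suc (Suc n)"] allE[of _ X] allE[of _ Y])
       (auto simp: X_def Y_def chainsE_def less_Suc_eq_le)
  with ext_sum[of c n xs x' ys y'] assms(1) show ?thesis
    by (simp add: X_def Y_def chainsE_def)
qed

lemma Psi_le: assumes "(x', y') \<in> G" shows "Psi c G a b x' \<le> ereal (c a y' - c x' y')"
  unfolding Psi_def
proof (rule SUP_least)
  fix y
  have "zeta c G a b y \<le> ereal (c a y' - c x' y' + c x' y)"
    unfolding zeta_def
    by (rule SUP_least) (use chain_bound[OF _ assms] in auto)
  then show "zeta c G a b y - ereal (c x' y) \<le> ereal (c a y' - c x' y')"
    by (rule ereal_minus_le_real)
qed

lemma zeta_ext: assumes "(x', y') \<in> G"
  shows "zeta c G a b y - ereal (c x' y) \<le> zeta c G a b y' - ereal (c x' y')"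
proof -
  have "zeta c G a b y \<le> zeta c G a b y' - ereal (c x' y') + ereal (c x' y)"
    unfolding zeta_def[of c G a b y]
  proof (rule SUP_least)
    fix t assume t: "t \<in> chainsE G a b y"
    obtain n xs ys where tt: "t = (n, xs, ys)" by (cases t) auto
    define xs' where "xs' = xs(Suc n := x')"
    define ys' where "ys' = ys(Suc n := y')"
    have ch: "(Suc n, xs', ys') \<in> chainsE G a b y'"
      using t assms by (auto simp: tt chainsE_def xs'_def ys'_def le_Suc_eq)
    have "chT c (Suc n) xs' ys' = chT c n xs ys - c x' y + c x' y'"
      using t by (simp add: chT_def xs'_def ys'_def tt chainsE_def)
    with zeta_ge[OF ch] have "ereal (chT c n xs ys - c x' y + c x' y') \<le> zeta c G a b y'" by simp
    then show "ereal (case t of (n, xs, ys) \<Rightarrow> chT c n xs ys) \<le> zeta c G a b y' - ereal (c x' y') + ereal (c x' y)"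
      by (cases "zeta c G a b y'") (auto simp: tt)
  qed
  then show ?thesis by (cases "zeta c G a b y'"; cases "zeta c G a b y") auto
qed

lemma Psi_c_convex: "c_convex c (Psi c G a b)"
  unfolding c_convex_def
proof (intro conjI)
  show "\<forall>x. Psi c G a b x \<noteq> - \<infinity>" using Psi_ge by (metis MInfty_neq_ereal(1) ereal_infty_less_eq(2))
  show "\<exists>x. Psi c G a b x \<noteq> \<infinity>" using Psi_le[OF ab] by (intro exI[of _ a]) auto
  show "\<exists>\<zeta>. \<forall>x. Psi c G a b x = (SUP y. \<zeta> y - ereal (c x y))"
    by (intro exI[of _ "zeta c G a b"]) (simp add: Psi_def)
qed

lemma Psi_subdiff: "G \<subseteq> c_subdiff c (Psi c G a b)"
proof safe
  fix x' y' assume g: "(x', y') \<in> G"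
  let ?P = "Psi c G a b"
  have fin: "?P x' \<noteq> \<infinity>" using Psi_le[OF g] by auto
  have nm: "?P x' \<noteq> -\<infinity>" using Psi_ge[of x'] by auto
  have up: "?P x' \<le> zeta c G a b y' - ereal (c x' y')"
    unfolding Psi_def by (rule SUP_least) (rule zeta_ext[OF g])
  have "c_transform c ?P y' = ?P x' + ereal (c x' y')"
  proof (rule antisym)
    show "c_transform c ?P y' \<le> ?P x' + ereal (c x' y')"
      unfolding c_transform_def by (rule INF_lower) simp
    show "?P x' + ereal (c x' y') \<le> c_transform c ?P y'"
      unfolding c_transform_def
    proof (rule INF_greatest)
      fix x
      have "zeta c G a b y' - ereal (c x y') \<le> ?P x" unfolding Psi_def by (rule SUP_upper) simp
      with up show "?P x' + ereal (c x' y') \<le> ?P x + ereal (c x y')"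
        by (cases "zeta c G a b y'"; cases "?P x"; cases "?P x'") auto
    qed
  qed
  then show "(x', y') \<in> c_subdiff c ?P"
    unfolding c_subdiff_def using fin nm by (cases "?P x'") auto
qed

lemma Psi_anchor: "Psi c G a b a = 0"
  using Psi_ge[of a] Psi_le[OF ab] by (simp add: zero_ereal_def antisym)

end


context
  fixes \<mu> :: "'a::polish_space measure" and \<nu> :: "'b::polish_space measure" and c :: "'a \<Rightarrow> 'b \<Rightarrow> real"
  assumes p\<mu>: "prob_space \<mu>" and s\<mu>: "sets \<mu> = sets borel"
    and p\<nu>: "prob_space \<nu>" and s\<nu>: "sets \<nu> = sets borel"
    and cc: "continuous_on UNIV (\<lambda>(x, y). c x y)"
begin

lemma sets_prod: "sets (\<mu> \<Otimes>\<^sub>M \<nu>) = sets (borel :: ('a \<times> 'b) measure)"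
  using sets_pair_measure_cong[OF s\<mu> s\<nu>] borel_prod by metis

lemma space_mu: "space \<mu> = UNIV" using sets_eq_imp_space_eq[OF s\<mu>] by simp
lemma space_nu: "space \<nu> = UNIV" using sets_eq_imp_space_eq[OF s\<nu>] by simp

lemma c_meas: "(\<lambda>z. c (fst z) (snd z)) \<in> borel_measurable (\<mu> \<Otimes>\<^sub>M \<nu>)"
proof -
  have "(\<lambda>z. c (fst z) (snd z)) = (\<lambda>(x, y). c x y)" by auto
  moreover have "(\<lambda>(x, y). c x y) \<in> borel_measurable (borel :: ('a \<times> 'b) measure)"
    by (rule borel_measurable_continuous_onI[OF cc])
  moreover have eq: "borel_measurable (\<mu> \<Otimes>\<^sub>M \<nu>) = borel_measurable borel"
    by (rule measurable_cong_sets[OF sets_prod refl])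
  ultimately show ?thesis by metis
qed

lemma c_cont1: "continuous_on UNIV (\<lambda>x. c x y)"
proof -
  have "continuous_on UNIV ((\<lambda>(x, y). c x y) \<circ> (\<lambda>x. (x, y)))"
    by (rule continuous_on_compose) (auto intro!: continuous_intros cc[THEN continuous_on_subset])
  then show ?thesis by (simp add: o_def)
qed

lemma c_cont2: "continuous_on UNIV (\<lambda>y. c x y)"
proof -
  have "continuous_on UNIV ((\<lambda>(x, y). c x y) \<circ> (\<lambda>y. (x, y)))"
    by (rule continuous_on_compose) (auto intro!: continuous_intros cc[THEN continuous_on_subset])
  then show ?thesis by (simp add: o_def)
qed

lemma cyc_factor:
  assumes ci: "cyc_inv_coupling c \<epsilon> \<mu> \<nu> \<pi>" and ep: "\<epsilon> > 0"
  shows "\<exists>A B. A \<in> borel_measurable \<mu> \<and> B \<in> borel_measurable \<nu> \<and> (\<forall>x. 0 < A x) \<and> (\<forall>y. 0 < B y) \<and>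
     \<pi> = density (\<mu> \<Otimes>\<^sub>M \<nu>) (\<lambda>z. ennreal (A (fst z) * B (snd z) * exp (- c (fst z) (snd z) / \<epsilon>)))"
proof -
  obtain f :: "'a \<times> 'b \<Rightarrow> real" where fm: "f \<in> borel_measurable (\<mu> \<Otimes>\<^sub>M \<nu>)" and fpos: "\<forall>z. 0 < f z"
    and pi: "\<pi> = density (\<mu> \<Otimes>\<^sub>M \<nu>) (\<lambda>z. ennreal (f z))"
    and cyc: "\<forall>(k::nat) (x::nat \<Rightarrow> 'a) (y::nat \<Rightarrow> 'b). k \<ge> 1 \<longrightarrow>
           (\<Prod>i<k. f (x i, y i)) =
             exp (- (1 / \<epsilon>) * ((\<Sum>i<k. c (x i) (y i)) - (\<Sum>i<k. c (x i) (y ((i + 1) mod k)))))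
             * (\<Prod>i<k. f (x i, y ((i + 1) mod k)))"
    using ci unfolding cyc_inv_coupling_def by blast
  define x0 :: 'a where "x0 = undefined"
  define y0 :: 'b where "y0 = undefined"
  have two: "f (x, y) * f (x0, y0) = exp (- (1 / \<epsilon>) * ((c x y + c x0 y0) - (c x y0 + c x0 y))) * (f (x, y0) * f (x0, y))"
    for x y
    using cyc[rule_format, of "Suc (Suc 0)" "\<lambda>i. if i = 0 then x else x0" "\<lambda>i. if i = 0 then y else y0"]
    by (simp add: ac_simps)
  define A where "A x = f (x, y0) * exp (c x y0 / \<epsilon>)" for x
  define B where "B y = f (x0, y) * exp (c x0 y / \<epsilon>) / (f (x0, y0) * exp (c x0 y0 / \<epsilon>))" for y
  have feq: "f z = A (fst z) * B (snd z) * exp (- c (fst z) (snd z) / \<epsilon>)" for z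
  proof -
    obtain x y where z: "z = (x, y)" by (cases z)
    have p0: "f (x0, y0) > 0" using fpos by auto
    define E where "E = exp (- (1 / \<epsilon>) * ((c x y + c x0 y0) - (c x y0 + c x0 y)))"
    have key: "E * exp (c x0 y0 / \<epsilon>) = exp (c x y0 / \<epsilon>) * exp (c x0 y / \<epsilon>) * exp (- c x y / \<epsilon>)"
      unfolding E_def exp_add[symmetric] using ep by (simp add: field_simps)
    have "A x * B y * exp (- c x y / \<epsilon>) = f (x, y0) * f (x0, y) / f (x0, y0) *
        (exp (c x y0 / \<epsilon>) * exp (c x0 y / \<epsilon>) * exp (- c x y / \<epsilon>) / exp (c x0 y0 / \<epsilon>))"
      by (simp add: A_def B_def field_simps)
    also have "exp (c x y0 / \<epsilon>) * exp (c x0 y / \<epsilon>) * exp (- c x y / \<epsilon>) / exp (c x0 y0 / \<epsilon>) = E"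
      using key by (simp add: field_simps)
    also have "f (x, y0) * f (x0, y) / f (x0, y0) * E = f (x, y)"
      using two[of x y] p0 unfolding E_def[symmetric] by (simp add: field_simps)
    finally show ?thesis by (simp add: z)
  qed
  have Am: "A \<in> borel_measurable \<mu>"
  proof -
    have "(\<lambda>x. f (x, y0)) \<in> borel_measurable \<mu>"
      using measurable_comp[OF measurable_Pair2'[of y0 \<nu> \<mu>] fm] space_nu by (simp add: o_def)
    moreover have "(\<lambda>x. c x y0) \<in> borel_measurable \<mu>"
      using borel_measurable_continuous_onI[OF c_cont1] measurable_cong_sets[OF s\<mu> refl] by blast
    ultimately show ?thesis unfolding A_def by measurable
  qed
  have Bm: "B \<in> borel_measurable \<nu>"
  proof -
    have "(\<lambda>y. f (x0, y)) \<in> borel_measurable \<nu>"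
      using measurable_comp[OF measurable_Pair1'[of x0 \<mu> \<nu>] fm] space_mu by (simp add: o_def)
    moreover have "(\<lambda>y. c x0 y) \<in> borel_measurable \<nu>"
      using borel_measurable_continuous_onI[OF c_cont2] measurable_cong_sets[OF s\<nu> refl] by blast
    ultimately show ?thesis unfolding B_def by measurable
  qed
  have "\<forall>x. 0 < A x" using fpos by (simp add: A_def)
  moreover have "\<forall>y. 0 < B y" using fpos by (simp add: B_def)
  moreover have "\<pi> = density (\<mu> \<Otimes>\<^sub>M \<nu>) (\<lambda>z. ennreal (A (fst z) * B (snd z) * exp (- c (fst z) (snd z) / \<epsilon>)))"
    unfolding pi using feq by simp
  ultimately show ?thesis using Am Bm by blast
qed

lemma rect_bounds:
  assumes Am: "A \<in> borel_measurable \<mu>" and Bm: "B \<in> borel_measurable \<nu>"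
    and Apos: "\<forall>x. 0 < A x" and Bpos: "\<forall>y. 0 < B y" and ep: "\<epsilon> > 0"
    and S: "S \<in> sets \<mu>" and T: "T \<in> sets \<nu>"
    and cl: "\<And>u v. u \<in> S \<Longrightarrow> v \<in> T \<Longrightarrow> \<bar>c u v - c0\<bar> \<le> \<delta>"
  defines "g \<equiv> (\<lambda>z. ennreal (A (fst z) * B (snd z) * exp (- c (fst z) (snd z) / \<epsilon>)))"
    and "PA \<equiv> (\<integral>\<^sup>+u. indicator S u * ennreal (A u) \<partial>\<mu>)"
    and "PB \<equiv> (\<integral>\<^sup>+v. indicator T v * ennreal (B v) \<partial>\<nu>)"
  shows "emeasure (density (\<mu> \<Otimes>\<^sub>M \<nu>) g) (S \<times> T) \<le> ennreal (exp (- (c0 - \<delta>) / \<epsilon>)) * (PA * PB)"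
    and "ennreal (exp (- (c0 + \<delta>) / \<epsilon>)) * (PA * PB) \<le> emeasure (density (\<mu> \<Otimes>\<^sub>M \<nu>) g) (S \<times> T)"
proof -
  interpret pn: prob_space \<nu> by (rule p\<nu>)
  note [measurable] = Am Bm S T
  have gm: "g \<in> borel_measurable (\<mu> \<Otimes>\<^sub>M \<nu>)"
    unfolding g_def using Am Bm c_meas by measurable
  have ST: "S \<times> T \<in> sets (\<mu> \<Otimes>\<^sub>M \<nu>)" using S T by simp
  have hm: "(\<lambda>z. (indicator S (fst z) * ennreal (A (fst z))) * (indicator T (snd z) * ennreal (B (snd z))))
      \<in> borel_measurable (\<mu> \<Otimes>\<^sub>M \<nu>)"
    using Am Bm S T by measurable
  have prod: "(\<integral>\<^sup>+z. (indicator S (fst z) * ennreal (A (fst z))) * (indicator T (snd z) * ennreal (B (snd z))) \<partial>(\<mu> \<Otimes>\<^sub>M \<nu>))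
     = PA * PB"
  proof -
    have "(\<integral>\<^sup>+z. (indicator S (fst z) * ennreal (A (fst z))) * (indicator T (snd z) * ennreal (B (snd z))) \<partial>(\<mu> \<Otimes>\<^sub>M \<nu>))
        = (\<integral>\<^sup>+x. \<integral>\<^sup>+y. (indicator S x * ennreal (A x)) * (indicator T y * ennreal (B y)) \<partial>\<nu> \<partial>\<mu>)"
      using pn.nn_integral_fst[OF hm] by simp
    also have "\<dots> = (\<integral>\<^sup>+x. (indicator S x * ennreal (A x)) * PB \<partial>\<mu>)"
      unfolding PB_def using Bm T by (intro nn_integral_cong nn_integral_cmult) measurable
    also have "\<dots> = PA * PB" unfolding PA_def using Am S by (intro nn_integral_multc) measurable
    finally show ?thesis .
  qed
  have em: "emeasure (density (\<mu> \<Otimes>\<^sub>M \<nu>) g) (S \<times> T) = (\<integral>\<^sup>+z. g z * indicator (S \<times> T) z \<partial>(\<mu> \<Otimes>\<^sub>M \<nu>))"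
    by (rule emeasure_density[OF gm ST])
  have "(\<integral>\<^sup>+z. g z * indicator (S \<times> T) z \<partial>(\<mu> \<Otimes>\<^sub>M \<nu>)) \<le>
      (\<integral>\<^sup>+z. ennreal (exp (- (c0 - \<delta>) / \<epsilon>)) * ((indicator S (fst z) * ennreal (A (fst z))) * (indicator T (snd z) * ennreal (B (snd z)))) \<partial>(\<mu> \<Otimes>\<^sub>M \<nu>))"
  proof (intro nn_integral_mono)
    fix z :: "'a \<times> 'b"
    obtain u v where z: "z = (u, v)" by (cases z)
    show "g z * indicator (S \<times> T) z \<le> ennreal (exp (- (c0 - \<delta>) / \<epsilon>)) * ((indicator S (fst z) * ennreal (A (fst z))) * (indicator T (snd z) * ennreal (B (snd z))))"
    proof (cases "u \<in> S \<and> v \<in> T")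
      case True
      have "(- c u v) / \<epsilon> \<le> (- (c0 - \<delta>)) / \<epsilon>"
        using cl[of u v] True ep by (intro divide_right_mono) (auto simp: abs_le_iff)
      then have "exp (- c u v / \<epsilon>) \<le> exp (- (c0 - \<delta>) / \<epsilon>)" by simp
      then have "A u * B v * exp (- c u v / \<epsilon>) \<le> exp (- (c0 - \<delta>) / \<epsilon>) * (A u * B v)"
        using Apos Bpos by (simp add: mult_left_mono mult.commute)
      then have "ennreal (A u * B v * exp (- c u v / \<epsilon>)) \<le> ennreal (exp (- (c0 - \<delta>) / \<epsilon>) * (A u * B v))"
        by (rule ennreal_leI)
      also have "\<dots> = ennreal (exp (- (c0 - \<delta>) / \<epsilon>)) * (ennreal (A u) * ennreal (B v))"
        using Apos[rule_format, of u] Bpos[rule_format, of v] by (simp add: ennreal_mult less_imp_le)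
      finally show ?thesis using True by (simp add: z g_def)
    qed (auto simp: z)
  qed
  also have "\<dots> = ennreal (exp (- (c0 - \<delta>) / \<epsilon>)) * (PA * PB)"
    using nn_integral_cmult[OF hm] prod by simp
  finally show "emeasure (density (\<mu> \<Otimes>\<^sub>M \<nu>) g) (S \<times> T) \<le> ennreal (exp (- (c0 - \<delta>) / \<epsilon>)) * (PA * PB)"
    using em by simp
  have "ennreal (exp (- (c0 + \<delta>) / \<epsilon>)) * (PA * PB) =
      (\<integral>\<^sup>+z. ennreal (exp (- (c0 + \<delta>) / \<epsilon>)) * ((indicator S (fst z) * ennreal (A (fst z))) * (indicator T (snd z) * ennreal (B (snd z)))) \<partial>(\<mu> \<Otimes>\<^sub>M \<nu>))"
    using nn_integral_cmult[OF hm] prod by simp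
  also have "\<dots> \<le> (\<integral>\<^sup>+z. g z * indicator (S \<times> T) z \<partial>(\<mu> \<Otimes>\<^sub>M \<nu>))"
  proof (intro nn_integral_mono)
    fix z :: "'a \<times> 'b"
    obtain u v where z: "z = (u, v)" by (cases z)
    show "ennreal (exp (- (c0 + \<delta>) / \<epsilon>)) * ((indicator S (fst z) * ennreal (A (fst z))) * (indicator T (snd z) * ennreal (B (snd z)))) \<le> g z * indicator (S \<times> T) z"
    proof (cases "u \<in> S \<and> v \<in> T")
      case True
      have "(- (c0 + \<delta>)) / \<epsilon> \<le> (- c u v) / \<epsilon>"
        using cl[of u v] True ep by (intro divide_right_mono) (auto simp: abs_le_iff)
      then have "exp (- (c0 + \<delta>) / \<epsilon>) \<le> exp (- c u v / \<epsilon>)" by simp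
      then have "exp (- (c0 + \<delta>) / \<epsilon>) * (A u * B v) \<le> A u * B v * exp (- c u v / \<epsilon>)"
        using Apos Bpos by (simp add: mult_left_mono mult.commute)
      then have "ennreal (exp (- (c0 + \<delta>) / \<epsilon>) * (A u * B v)) \<le> ennreal (A u * B v * exp (- c u v / \<epsilon>))"
        by (rule ennreal_leI)
      moreover have "ennreal (exp (- (c0 + \<delta>) / \<epsilon>) * (A u * B v)) = ennreal (exp (- (c0 + \<delta>) / \<epsilon>)) * (ennreal (A u) * ennreal (B v))"
        using Apos[rule_format, of u] Bpos[rule_format, of v] by (simp add: ennreal_mult less_imp_le)
      ultimately show ?thesis using True by (simp add: z g_def)
    qed (auto simp: z)
  qed
  finally show "ennreal (exp (- (c0 + \<delta>) / \<epsilon>)) * (PA * PB) \<le> emeasure (density (\<mu> \<Otimes>\<^sub>M \<nu>) g) (S \<times> T)"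
    using em by simp
qed

end

lemma prod_mono_ennreal: "(\<And>i. i \<in> A \<Longrightarrow> f i \<le> (g i::ennreal)) \<Longrightarrow> prod f A \<le> prod g A"
proof (induction A rule: infinite_finite_induct)
  case (insert x F)
  then show ?case by (simp add: mult_mono)
qed auto

context
  fixes \<mu> :: "'a::polish_space measure" and \<nu> :: "'b::polish_space measure" and c :: "'a \<Rightarrow> 'b \<Rightarrow> real"
  assumes p\<mu>: "prob_space \<mu>" and s\<mu>: "sets \<mu> = sets borel"
    and p\<nu>: "prob_space \<nu>" and s\<nu>: "sets \<nu> = sets borel"
    and cc: "continuous_on UNIV (\<lambda>(x, y). c x y)"
begin

lemma prod_ineq:
  fixes k :: nat and X :: "nat \<Rightarrow> 'a" and Y :: "nat \<Rightarrow> 'b" and \<sigma> :: "nat \<Rightarrow> nat" and \<Delta> \<delta> r \<epsilon> :: real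
  assumes Am: "A \<in> borel_measurable \<mu>" and Bm: "B \<in> borel_measurable \<nu>"
    and Apos: "\<forall>x. 0 < A x" and Bpos: "\<forall>y. 0 < B y" and ep: "\<epsilon> > 0"
    and sig: "\<sigma> permutes {..<k}"
    and cl: "\<And>i j u v. i < k \<Longrightarrow> j < k \<Longrightarrow> u \<in> ball (X i) r \<Longrightarrow> v \<in> ball (Y j) r \<Longrightarrow>
               \<bar>c u v - c (X i) (Y j)\<bar> \<le> \<delta>"
  defines "\<pi> \<equiv> density (\<mu> \<Otimes>\<^sub>M \<nu>) (\<lambda>z. ennreal (A (fst z) * B (snd z) * exp (- c (fst z) (snd z) / \<epsilon>)))"
    and "\<Delta> \<equiv> (\<Sum>j<k. c (X j) (Y j)) - (\<Sum>j<k. c (X j) (Y (\<sigma> j)))"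
  shows "(\<Prod>j<k. emeasure \<pi> (ball (X j) r \<times> ball (Y j) r)) \<le>
     ennreal (exp ((- \<Delta> + 2 * k * \<delta>) / \<epsilon>)) * (\<Prod>j<k. emeasure \<pi> (ball (X j) r \<times> ball (Y (\<sigma> j)) r))"
proof -
  define PA where "PA i = (\<integral>\<^sup>+u. indicator (ball (X i) r) u * ennreal (A u) \<partial>\<mu>)" for i
  define PB where "PB j = (\<integral>\<^sup>+v. indicator (ball (Y j) r) v * ennreal (B v) \<partial>\<nu>)" for j
  have bS: "ball x r \<in> sets \<mu>" for x using s\<mu> by simp
  have bT: "ball y r \<in> sets \<nu>" for y using s\<nu> by simp
  have sj: "\<sigma> j < k" if "j < k" for j using sig that permutes_in_image by fastforce
  have up: "emeasure \<pi> (ball (X j) r \<times> ball (Y j) r) \<le> ennreal (exp (- (c (X j) (Y j) - \<delta>) / \<epsilon>)) * (PA j * PB j)"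
    if "j < k" for j
    unfolding \<pi>_def PA_def PB_def
    by (rule rect_bounds(1)[OF p\<mu> s\<mu> p\<nu> s\<nu> cc Am Bm Apos Bpos ep bS bT]) (use cl that in auto)
  have lo: "ennreal (exp (- (c (X j) (Y (\<sigma> j)) + \<delta>) / \<epsilon>)) * (PA j * PB (\<sigma> j)) \<le> emeasure \<pi> (ball (X j) r \<times> ball (Y (\<sigma> j)) r)"
    if "j < k" for j
    unfolding \<pi>_def PA_def PB_def
    by (rule rect_bounds(2)[OF p\<mu> s\<mu> p\<nu> s\<nu> cc Am Bm Apos Bpos ep bS bT]) (use cl that sj in auto)
  define e1 where "e1 = (\<Sum>j<k. - (c (X j) (Y j) - \<delta>) / \<epsilon>)"
  define e2 where "e2 = (\<Sum>j<k. - (c (X j) (Y (\<sigma> j)) + \<delta>) / \<epsilon>)"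
  have e12: "e1 = (- \<Delta> + 2 * k * \<delta>) / \<epsilon> + e2"
    unfolding e1_def e2_def \<Delta>_def using ep
    by (simp add: sum_divide_distrib[symmetric] sum.distrib sum_subtractf field_simps card_lessThan)
  have PBs: "(\<Prod>j<k. PB (\<sigma> j)) = (\<Prod>j<k. PB j)"
    using prod.reindex_bij_betw[OF permutes_imp_bij[OF sig], of PB] .
  have "(\<Prod>j<k. emeasure \<pi> (ball (X j) r \<times> ball (Y j) r)) \<le>
      (\<Prod>j<k. ennreal (exp (- (c (X j) (Y j) - \<delta>) / \<epsilon>)) * (PA j * PB j))"
    by (rule prod_mono_ennreal) (use up in auto)
  also have "\<dots> = ennreal (exp e1) * ((\<Prod>j<k. PA j) * (\<Prod>j<k. PB j))"
    unfolding e1_def exp_sum[OF finite_lessThan] prod.distrib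
    by (subst prod_ennreal) auto
  also have "\<dots> = ennreal (exp ((- \<Delta> + 2 * k * \<delta>) / \<epsilon>)) * (ennreal (exp e2) * ((\<Prod>j<k. PA j) * (\<Prod>j<k. PB (\<sigma> j))))"
    unfolding e12 PBs exp_add by (simp add: ennreal_mult mult.assoc)
  also have "ennreal (exp e2) * ((\<Prod>j<k. PA j) * (\<Prod>j<k. PB (\<sigma> j))) =
      (\<Prod>j<k. ennreal (exp (- (c (X j) (Y (\<sigma> j)) + \<delta>) / \<epsilon>)) * (PA j * PB (\<sigma> j)))"
    unfolding e2_def exp_sum[OF finite_lessThan] prod.distrib
    by (subst prod_ennreal) auto
  also have "\<dots> \<le> (\<Prod>j<k. emeasure \<pi> (ball (X j) r \<times> ball (Y (\<sigma> j)) r))"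
    by (rule prod_mono_ennreal) (use lo in auto)
  finally show ?thesis by (simp add: mult_left_mono)
qed

end

lemma supp_lower:
  fixes P :: "'i \<Rightarrow> 'c::metric_space measure" and P0 :: "'c measure"
  assumes wc: "weak_conv_filter P P0 F"
    and ev: "eventually (\<lambda>i. prob_space (P i) \<and> sets (P i) = sets borel) F"
    and p0: "prob_space P0" and s0: "sets P0 = sets borel"
    and z: "z \<in> msupport P0" and rho: "\<rho> > 0"
  shows "\<exists>L>0. eventually (\<lambda>i. L \<le> measure (P i) (ball z \<rho>)) F"
proof -
  define g where "g w = max 0 (1 - dist w z / \<rho>)" for w
  have gc: "continuous_on UNIV g" unfolding g_def using rho by (intro continuous_intros) auto
  have g01: "0 \<le> g w \<and> g w \<le> 1" for w unfolding g_def using rho by auto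
  have gb: "bounded (range g)"
    unfolding bounded_iff using g01 by (intro exI[of _ 1]) auto
  have gmeas: "g \<in> borel_measurable M" if "sets M = sets borel" for M :: "'c measure"
    using borel_measurable_continuous_onI[OF gc] measurable_cong_sets[OF that refl] by metis
  have gint: "integrable M g" if "prob_space M" "sets M = sets borel" for M :: "'c measure"
  proof -
    interpret prob_space M by fact
    show ?thesis using g01 gmeas[OF that(2)] by (intro integrable_const_bound[where B=1]) auto
  qed
  have lim: "((\<lambda>i. integral\<^sup>L (P i) g) \<longlongrightarrow> integral\<^sup>L P0 g) F"
    using wc gc gb unfolding weak_conv_filter_def by blast
  interpret P0: prob_space P0 by (rule p0)
  have ball_sets: "ball w t \<in> sets M" if "sets M = sets borel" for M :: "'c measure" and w t
    using that by simp
  have pos: "emeasure P0 (ball z (\<rho>/2)) > 0"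
    using z rho unfolding msupport_def by auto
  hence mpos: "measure P0 (ball z (\<rho>/2)) > 0"
    by (simp add: P0.emeasure_eq_measure)
  have "integral\<^sup>L P0 (\<lambda>w. (1/2::real) * indicator (ball z (\<rho>/2)) w) \<le> integral\<^sup>L P0 g"
  proof (rule integral_mono)
    show "integrable P0 (\<lambda>w. (1/2::real) * indicator (ball z (\<rho>/2)) w)"
      using ball_sets[OF s0] by (intro integrable_mult_right integrable_real_indicator) (auto simp: P0.emeasure_eq_measure)
    show "integrable P0 g" by (rule gint[OF p0 s0])
    fix w show "(1/2::real) * indicator (ball z (\<rho>/2)) w \<le> g w"
      using g01[of w] rho by (auto simp: g_def indicator_def dist_commute)
  qed
  hence mg: "integral\<^sup>L P0 g > 0"
    using mpos ball_sets[OF s0] by (simp add: P0.emeasure_eq_measure)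
  have "eventually (\<lambda>i. integral\<^sup>L P0 g / 2 < integral\<^sup>L (P i) g) F"
  proof -
    have "integral\<^sup>L P0 g / 2 < integral\<^sup>L P0 g" using mg by simp
    from order_tendstoD(1)[OF lim this] show ?thesis .
  qed
  with ev have "eventually (\<lambda>i. integral\<^sup>L P0 g / 2 \<le> measure (P i) (ball z \<rho>)) F"
  proof eventually_elim
    case (elim i)
    then interpret Pi: prob_space "P i" by auto
    have "integral\<^sup>L (P i) g \<le> integral\<^sup>L (P i) (indicator (ball z \<rho>))"
    proof (rule integral_mono)
      show "integrable (P i) g" using elim gint by auto
      show "integrable (P i) (indicator (ball z \<rho>) :: 'c \<Rightarrow> real)"
        using elim ball_sets by (intro integrable_real_indicator) (auto simp: Pi.emeasure_eq_measure)
      fix w show "g w \<le> indicator (ball z \<rho>) w"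
        using g01[of w] rho by (auto simp: g_def indicator_def dist_commute field_simps)
    qed
    then show ?case using elim ball_sets by simp
  qed
  then show ?thesis using mg by (intro exI[of _ "integral\<^sup>L P0 g / 2"]) auto
qed


lemma supp_closed: "closed (msupport M)"
proof -
  have "- msupport M = \<Union>{U. open U \<and> emeasure M U = 0}"
  proof safe
    fix w assume "w \<notin> msupport M"
    then obtain U where "open U" "w \<in> U" "\<not> emeasure M U > 0" unfolding msupport_def by auto
    then show "w \<in> \<Union>{U. open U \<and> emeasure M U = 0}" by (auto simp: not_gr_zero)
  next
    fix w U assume "w \<in> msupport M" "open U" "emeasure M U = 0" "w \<in> U"
    then show False unfolding msupport_def by auto
  qed
  then have "open (- msupport M)" by auto
  then show ?thesis by (simp add: closed_def)
qed

lemma supp_full: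
  fixes P0 :: "'c::{second_countable_topology, complete_space} measure"
  assumes p0: "prob_space P0" and s0: "sets P0 = sets borel"
  shows "emeasure P0 (- msupport P0) = 0"
proof -
  interpret prob_space P0 by (rule p0)
  have ob: "- msupport P0 \<in> sets borel" using supp_closed by (auto intro: borel_open simp: closed_def)
  have "emeasure P0 (- msupport P0) = (SUP K \<in> {K. K \<subseteq> - msupport P0 \<and> compact K}. emeasure P0 K)"
    by (rule inner_regular[OF s0 _ ob]) simp
  also have "\<dots> \<le> 0"
  proof (rule SUP_least)
    fix K assume K: "K \<in> {K. K \<subseteq> - msupport P0 \<and> compact K}"
    define \<U> where "\<U> = {U. open U \<and> emeasure P0 U = 0}"
    have KU: "K \<subseteq> \<Union>\<U>"
    proof
      fix w assume "w \<in> K"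
      then have "w \<notin> msupport P0" using K by auto
      then obtain U where "open U" "w \<in> U" "\<not> emeasure P0 U > 0" unfolding msupport_def by auto
      then show "w \<in> \<Union>\<U>" by (auto simp: \<U>_def not_gr_zero)
    qed
    have cK: "compact K" using K by auto
    have oU: "\<And>B. B \<in> \<U> \<Longrightarrow> open B" by (auto simp: \<U>_def)
    obtain \<U>' where U': "\<U>' \<subseteq> \<U>" "finite \<U>'" "K \<subseteq> \<Union>\<U>'"
      by (rule compactE[OF cK KU oU])
    have "emeasure P0 K \<le> emeasure P0 (\<Union>\<U>')"
    proof (rule emeasure_mono)
      show "K \<subseteq> \<Union>\<U>'" by (rule U'(3))
      have "open (\<Union>\<U>')" using U' by (auto simp: \<U>_def)
      then show "\<Union>\<U>' \<in> sets P0" using s0 by (simp add: borel_open)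
    qed
    also have "\<dots> = emeasure P0 (\<Union>(id ` \<U>'))" by simp
    also have "\<dots> \<le> (\<Sum>U\<in>\<U>'. emeasure P0 (id U))"
      using U' s0 by (intro emeasure_subadditive_finite) (auto simp: \<U>_def)
    also have "\<dots> = 0" using U' by (intro sum.neutral) (auto simp: \<U>_def)
    finally show "emeasure P0 K \<le> 0" .
  qed
  finally show ?thesis by simp
qed

lemma compact_approx:
  fixes P0 :: "'c::{second_countable_topology, complete_space} measure"
  assumes p0: "prob_space P0" and s0: "sets P0 = sets borel"
    and S: "S \<in> sets borel" and null: "emeasure P0 (- S) = 0" and e: "e > 0"
  shows "\<exists>K. compact K \<and> K \<subseteq> S \<and> measure P0 (- K) < e"
proof -
  interpret prob_space P0 by (rule p0)
  have sp: "space P0 = UNIV" using sets_eq_imp_space_eq[OF s0] by simp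
  have "measure P0 (- S) = 0" using null by (simp add: emeasure_eq_measure)
  then have m1: "measure P0 S = 1"
    using prob_compl[of S] S s0 sp by (simp add: Compl_eq_Diff_UNIV)
  have "emeasure P0 S = (SUP K \<in> {K. K \<subseteq> S \<and> compact K}. emeasure P0 K)"
    by (rule inner_regular[OF s0 _ S]) simp
  moreover have "ennreal (1 - e) < emeasure P0 S"
    using m1 e by (simp add: emeasure_eq_measure ennreal_lessI)
  ultimately obtain K where K: "K \<subseteq> S" "compact K" "ennreal (1 - e) < emeasure P0 K"
    by (auto simp: less_SUP_iff)
  have Ks: "K \<in> sets P0" using s0 by (simp add: borel_closed compact_imp_closed K(2))
  have "1 - e < measure P0 K"
  proof (cases "1 - e \<ge> 0")
    case True then show ?thesis using K(3) by (simp add: emeasure_eq_measure ennreal_less_iff)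
  next
    case False then show ?thesis using measure_nonneg[of P0 K] by linarith
  qed
  moreover have "measure P0 (- K) = 1 - measure P0 K"
    using prob_compl[OF Ks] sp by (simp add: Compl_eq_Diff_UNIV)
  ultimately show ?thesis using K by (intro exI[of _ K]) auto
qed


lemma dist_pair_le: "dist (u, v) (x, y) \<le> dist u x + dist v y"
  unfolding dist_Pair_Pair by (rule sqrt_sum_squares_le_sum) auto

lemma ev_at_right0: "(\<exists>b>0. \<forall>r>0. r < b \<longrightarrow> P r) \<Longrightarrow> eventually P (at_right (0::real))"
  using eventually_at_right[OF zero_less_one[where 'a=real]] by auto

lemma box_in_open:
  assumes "open V" "(x, y) \<in> V"
  shows "eventually (\<lambda>r. ball x r \<times> ball y r \<subseteq> V) (at_right (0::real))"
proof -
  obtain e where e: "e > 0" "ball (x, y) e \<subseteq> V" using assms open_contains_ball by blast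
  show ?thesis
  proof (rule ev_at_right0, intro exI[of _ "e/2"] conjI allI impI)
    fix r :: real assume r: "r > 0" "r < e / 2"
    show "ball x r \<times> ball y r \<subseteq> V"
    proof safe
      fix u v assume "u \<in> ball x r" "v \<in> ball y r"
      then have "dist (u, v) (x, y) < e" using dist_pair_le[of u v x y] r
        by (auto simp: dist_commute)
      then show "(u, v) \<in> V" using e by (auto simp: dist_commute)
    qed
  qed (use e in auto)
qed

lemma cont_near:
  fixes c :: "'a::metric_space \<Rightarrow> 'b::metric_space \<Rightarrow> real"
  assumes cc: "continuous_on UNIV (\<lambda>(x, y). c x y)" and d: "\<delta> > 0"
  shows "eventually (\<lambda>r. \<forall>u v. dist u x < r \<longrightarrow> dist v y < r \<longrightarrow> \<bar>c u v - c x y\<bar> \<le> \<delta>) (at_right (0::real))"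
proof -
  obtain e where e: "e > 0" "\<forall>z. dist z (x, y) < e \<longrightarrow> dist ((\<lambda>(x, y). c x y) z) ((\<lambda>(x, y). c x y) (x, y)) < \<delta>"
    using cc d unfolding continuous_on_iff by blast
  show ?thesis
  proof (rule ev_at_right0, intro exI[of _ "e/2"] conjI allI impI)
    fix r u v :: _ assume r: "(r::real) > 0" "r < e / 2" and uv: "dist u x < r" "dist v y < r"
    then have "dist (u, v) (x, y) < e" using dist_pair_le[of u v x y] by auto
    then show "\<bar>c u v - c x y\<bar> \<le> \<delta>" using e by (force simp: dist_real_def)
  qed (use e in auto)
qed


lemma ev_pick: "eventually P (at_right (0::real)) \<Longrightarrow> \<exists>r>0. P r"
proof -
  assume "eventually P (at_right (0::real))"
  then obtain b where "b > 0" "\<forall>r>0. r < b \<longrightarrow> P r"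
    using eventually_at_right[OF zero_less_one[where 'a=real]] by auto
  then show ?thesis by (intro exI[of _ "b/2"]) auto
qed

lemma exp_small: assumes "a > 0" "L > 0"
  shows "eventually (\<lambda>x. exp (- a / (2 * x)) < L) (at_right (0::real))"
proof (rule ev_at_right0)
  define l where "l = - ln L"
  define b where "b = (if l \<le> 0 then 1 else a / (2 * l))"
  have "b > 0" using assms by (auto simp: b_def)
  moreover have "exp (- a / (2 * x)) < L" if x: "x > 0" "x < b" for x
  proof -
    have "- a / (2 * x) < ln L"
    proof (cases "ln L \<ge> 0")
      case True
      have "- a / (2 * x) < 0" using assms x by (simp add: divide_neg_pos)
      then show ?thesis using True by linarith
    next
      case False
      then have "l > 0" by (simp add: l_def)
      then have "x * (2 * l) < a" using x by (simp add: b_def pos_less_divide_eq)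
      then show ?thesis using x False by (simp add: field_simps l_def)
    qed
    then have "exp (- a / (2 * x)) < exp (ln L)" by simp
    then show ?thesis using assms by simp
  qed
  ultimately show "\<exists>b>0. \<forall>r>0. r < b \<longrightarrow> exp (- a / (2 * r)) < L" by blast
qed

lemma eps_ln_small: assumes "\<eta> > 0" "L > 0"
  shows "eventually (\<lambda>x. - \<eta> < x * ln L) (at_right (0::real))"
proof (rule ev_at_right0)
  define l where "l = - ln L"
  define b where "b = (if l \<le> 0 then 1 else \<eta> / l)"
  have "b > 0" using assms by (auto simp: b_def)
  moreover have "- \<eta> < x * ln L" if x: "x > 0" "x < b" for x
  proof (cases "ln L \<ge> 0")
    case True
    then have "x * ln L \<ge> 0" using x by simp
    then show ?thesis using assms by linarith
  next
    case False
    then have "l > 0" by (simp add: l_def)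
    then have "x * l < \<eta>" using x by (simp add: b_def pos_less_divide_eq)
    then show ?thesis by (simp add: l_def)
  qed
  ultimately show "\<exists>b>0. \<forall>r>0. r < b \<longrightarrow> - \<eta> < r * ln L" by blast
qed

locale setting =
  fixes \<mu> :: "'a::polish_space measure" and \<nu> :: "'b::polish_space measure"
    and c :: "'a \<Rightarrow> 'b \<Rightarrow> real"
    and \<pi> :: "real \<Rightarrow> ('a \<times> 'b) measure" and \<pi>\<^sub>s :: "('a \<times> 'b) measure"
  assumes p\<mu>: "prob_space \<mu>" and s\<mu>: "sets \<mu> = sets borel"
    and p\<nu>: "prob_space \<nu>" and s\<nu>: "sets \<nu> = sets borel"
    and cc: "continuous_on UNIV (\<lambda>(x, y). c x y)"
    and cyc: "\<And>\<epsilon>. \<epsilon> > 0 \<Longrightarrow> cyc_inv_coupling c \<epsilon> \<mu> \<nu> (\<pi> \<epsilon>)"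
    and coup: "coupling \<mu> \<nu> \<pi>\<^sub>s"
    and wc: "weak_conv_filter \<pi> \<pi>\<^sub>s (at_right 0)"
begin

lemma sets_prod': "sets (\<mu> \<Otimes>\<^sub>M \<nu>) = sets (borel :: ('a \<times> 'b) measure)"
  using sets_pair_measure_cong[OF s\<mu> s\<nu>] borel_prod by metis

lemma pi_facts:
  assumes ep: "\<epsilon> > 0"
  shows "prob_space (\<pi> \<epsilon>)" "sets (\<pi> \<epsilon>) = sets borel" "absolutely_continuous (\<mu> \<Otimes>\<^sub>M \<nu>) (\<pi> \<epsilon>)"
    "\<exists>A B. A \<in> borel_measurable \<mu> \<and> B \<in> borel_measurable \<nu> \<and> (\<forall>x. 0 < A x) \<and> (\<forall>y. 0 < B y) \<and>
     \<pi> \<epsilon> = density (\<mu> \<Otimes>\<^sub>M \<nu>) (\<lambda>z. ennreal (A (fst z) * B (snd z) * exp (- c (fst z) (snd z) / \<epsilon>)))"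
  using cyc[OF ep] sets_prod' cyc_factor[OF p\<mu> s\<mu> p\<nu> s\<nu> cc cyc[OF ep] ep]
  by (auto simp: cyc_inv_coupling_def coupling_def)

lemma ps_facts: "prob_space \<pi>\<^sub>s" "sets \<pi>\<^sub>s = sets borel"
  using coup sets_prod' by (auto simp: coupling_def)

lemma ev_pi: "eventually (\<lambda>\<epsilon>. prob_space (\<pi> \<epsilon>) \<and> sets (\<pi> \<epsilon>) = sets borel) (at_right 0)"
  using pi_facts(1,2) by (auto simp: eventually_at_right_less intro: eventually_mono[OF eventually_at_right_less])

lemma loc_bound:
  fixes k :: nat and X :: "nat \<Rightarrow> 'a" and Y :: "nat \<Rightarrow> 'b" and \<delta> :: real
  assumes k: "k \<ge> 1" and d: "\<delta> > 0"
  shows "eventually (\<lambda>r. \<forall>\<epsilon>>0. (\<Prod>j<k. measure (\<pi> \<epsilon>) (ball (X j) r \<times> ball (Y j) r)) \<le>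
     exp ((- ((\<Sum>j<k. c (X j) (Y j)) - (\<Sum>j<k. c (X j) (Y (sg k j)))) + 2 * k * \<delta>) / \<epsilon>) *
     (\<Prod>j<k. measure (\<pi> \<epsilon>) (ball (X j) r \<times> ball (Y (sg k j)) r))) (at_right 0)"
proof -
  have "eventually (\<lambda>r. \<forall>p\<in>{..<k}\<times>{..<k}. \<forall>u v. dist u (X (fst p)) < r \<longrightarrow> dist v (Y (snd p)) < r \<longrightarrow>
      \<bar>c u v - c (X (fst p)) (Y (snd p))\<bar> \<le> \<delta>) (at_right 0)"
    by (rule eventually_ball_finite) (auto intro: eventually_mono[OF cont_near[OF cc d]])
  then show ?thesis
  proof eventually_elim
    case (elim r)
    show ?case
    proof (intro allI impI)
      fix \<epsilon> :: real assume ep: "\<epsilon> > 0"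
      obtain A B where Am: "A \<in> borel_measurable \<mu>" and Bm: "B \<in> borel_measurable \<nu>"
        and Apos: "\<forall>x. 0 < A x" and Bpos: "\<forall>y. 0 < B y"
        and pe: "\<pi> \<epsilon> = density (\<mu> \<Otimes>\<^sub>M \<nu>) (\<lambda>z. ennreal (A (fst z) * B (snd z) * exp (- c (fst z) (snd z) / \<epsilon>)))"
        using pi_facts(4)[OF ep] by blast
      interpret pp: prob_space "\<pi> \<epsilon>" using pi_facts(1)[OF ep] .
      define \<Delta> where "\<Delta> = (\<Sum>j<k. c (X j) (Y j)) - (\<Sum>j<k. c (X j) (Y (sg k j)))"
      have cl: "\<bar>c u v - c (X i) (Y j)\<bar> \<le> \<delta>" if "i < k" "j < k" "u \<in> ball (X i) r" "v \<in> ball (Y j) r" for i j u v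
        using elim that by (auto simp: dist_commute)
      have ineq: "(\<Prod>j<k. emeasure (\<pi> \<epsilon>) (ball (X j) r \<times> ball (Y j) r)) \<le>
          ennreal (exp ((- \<Delta> + 2 * k * \<delta>) / \<epsilon>)) * (\<Prod>j<k. emeasure (\<pi> \<epsilon>) (ball (X j) r \<times> ball (Y (sg k j)) r))"
        unfolding pe \<Delta>_def
        by (rule prod_ineq[OF p\<mu> s\<mu> p\<nu> s\<nu> cc Am Bm Apos Bpos ep sg_permutes[OF k]]) (rule cl)
      have "ennreal (\<Prod>j<k. measure (\<pi> \<epsilon>) (ball (X j) r \<times> ball (Y j) r)) \<le>
          ennreal (exp ((- \<Delta> + 2 * k * \<delta>) / \<epsilon>) * (\<Prod>j<k. measure (\<pi> \<epsilon>) (ball (X j) r \<times> ball (Y (sg k j)) r)))"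
        using ineq by (simp add: pp.emeasure_eq_measure prod_ennreal ennreal_mult prod_nonneg)
      then show "(\<Prod>j<k. measure (\<pi> \<epsilon>) (ball (X j) r \<times> ball (Y j) r)) \<le>
          exp ((- \<Delta> + 2 * k * \<delta>) / \<epsilon>) * (\<Prod>j<k. measure (\<pi> \<epsilon>) (ball (X j) r \<times> ball (Y (sg k j)) r))"
        by (subst (asm) ennreal_le_iff) (auto intro!: mult_nonneg_nonneg prod_nonneg)
    qed
  qed
qed

end

context setting
begin

lemma ball_sub_box: "ball (x, y) r \<subseteq> ball x r \<times> ball y r"
proof safe
  fix u v assume "(u, v) \<in> ball (x, y) r"
  then have d: "dist (x, y) (u, v) < r" by simp
  show "u \<in> ball x r" using dist_fst_le[of "(x, y)" "(u, v)"] d by simp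
  show "v \<in> ball y r" using dist_snd_le[of "(x, y)" "(u, v)"] d by simp
qed

lemma box_borel: "ball x r \<times> ball y r \<in> sets borel"
  by (intro borel_open open_Times) auto

lemma supp_box_lower:
  assumes "j \<in> S \<Longrightarrow> (X j, Y j) \<in> msupport \<pi>\<^sub>s" "finite S" "r > 0"
    and pts: "\<And>j. j \<in> S \<Longrightarrow> (X j, Y j) \<in> msupport \<pi>\<^sub>s"
  shows "\<exists>Lf. (\<forall>j\<in>S. Lf j > 0) \<and>
     eventually (\<lambda>\<epsilon>. \<forall>j\<in>S. Lf j \<le> measure (\<pi> \<epsilon>) (ball (X j) r \<times> ball (Y j) r)) (at_right 0)"
proof -
  have "\<forall>j\<in>S. \<exists>L>0. eventually (\<lambda>\<epsilon>. L \<le> measure (\<pi> \<epsilon>) (ball (X j) r \<times> ball (Y j) r)) (at_right 0)"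
  proof
    fix j assume j: "j \<in> S"
    obtain L where L: "L > 0" "eventually (\<lambda>\<epsilon>. L \<le> measure (\<pi> \<epsilon>) (ball (X j, Y j) r)) (at_right 0)"
      using supp_lower[OF wc ev_pi ps_facts pts[OF j] \<open>r > 0\<close>] by blast
    have "eventually (\<lambda>\<epsilon>. L \<le> measure (\<pi> \<epsilon>) (ball (X j) r \<times> ball (Y j) r)) (at_right 0)"
      using L(2) ev_pi
    proof eventually_elim
      case (elim \<epsilon>)
      then interpret pp: prob_space "\<pi> \<epsilon>" by auto
      have "measure (\<pi> \<epsilon>) (ball (X j, Y j) r) \<le> measure (\<pi> \<epsilon>) (ball (X j) r \<times> ball (Y j) r)"
        using elim ball_sub_box box_borel by (intro pp.finite_measure_mono) auto
      then show ?case using elim by linarith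
    qed
    then show "\<exists>L>0. eventually (\<lambda>\<epsilon>. L \<le> measure (\<pi> \<epsilon>) (ball (X j) r \<times> ball (Y j) r)) (at_right 0)"
      using L(1) by blast
  qed
  then have "\<exists>Lf. \<forall>j\<in>S. Lf j > 0 \<and> eventually (\<lambda>\<epsilon>. Lf j \<le> measure (\<pi> \<epsilon>) (ball (X j) r \<times> ball (Y j) r)) (at_right 0)"
    by (rule bchoice)
  then obtain Lf where Lf: "\<forall>j\<in>S. Lf j > 0 \<and> eventually (\<lambda>\<epsilon>. Lf j \<le> measure (\<pi> \<epsilon>) (ball (X j) r \<times> ball (Y j) r)) (at_right 0)"
    by blast
  then have "eventually (\<lambda>\<epsilon>. \<forall>j\<in>S. Lf j \<le> measure (\<pi> \<epsilon>) (ball (X j) r \<times> ball (Y j) r)) (at_right 0)"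
    by (intro eventually_ball_finite \<open>finite S\<close>) auto
  then show ?thesis using Lf by blast
qed

lemma ev_pos: "eventually (\<lambda>\<epsilon>::real. \<epsilon> > 0) (at_right 0)"
  by (simp add: eventually_at_right_less)

lemma CM_Gamma: "CM c (msupport \<pi>\<^sub>s)"
  unfolding CM_def
proof (intro allI impI)
  fix k :: nat and X :: "nat \<Rightarrow> 'a" and Y :: "nat \<Rightarrow> 'b"
  assume k: "k \<ge> 1" and pts: "\<forall>j<k. (X j, Y j) \<in> msupport \<pi>\<^sub>s"
  define D where "D = (\<Sum>j<k. c (X j) (Y j)) - (\<Sum>j<k. c (X j) (Y (sg k j)))"
  show "(\<Sum>j<k. c (X j) (Y j)) \<le> (\<Sum>j<k. c (X j) (Y (sg k j)))"
  proof (rule ccontr)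
    assume "\<not> ?thesis"
    then have Dp: "D > 0" by (simp add: D_def)
    define \<delta> where "\<delta> = D / (4 * k)"
    have dp: "\<delta> > 0" using Dp k by (simp add: \<delta>_def)
    have kd: "- D + real (2 * k) * \<delta> = - D / 2" using k by (simp add: \<delta>_def field_simps)
    obtain r where r: "r > 0" and rb: "\<forall>\<epsilon>>0. (\<Prod>j<k. measure (\<pi> \<epsilon>) (ball (X j) r \<times> ball (Y j) r)) \<le>
       exp ((- D + real (2 * k) * \<delta>) / \<epsilon>) * (\<Prod>j<k. measure (\<pi> \<epsilon>) (ball (X j) r \<times> ball (Y (sg k j)) r))"
      using ev_pick[OF loc_bound[OF k dp, of X Y]] unfolding D_def by blast
    obtain Lf where Lf: "\<forall>j\<in>{..<k}. Lf j > 0"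
      and ev1: "eventually (\<lambda>\<epsilon>. \<forall>j\<in>{..<k}. Lf j \<le> measure (\<pi> \<epsilon>) (ball (X j) r \<times> ball (Y j) r)) (at_right 0)"
      using supp_box_lower[of _ "{..<k}" X Y r] pts r by auto
    have Lp: "(\<Prod>j<k. Lf j) > 0" using Lf by (intro prod_pos) auto
    have ev2: "eventually (\<lambda>\<epsilon>. exp (- D / (2 * \<epsilon>)) < (\<Prod>j<k. Lf j)) (at_right 0)"
      by (rule exp_small[OF Dp Lp])
    from ev1 ev2 ev_pi ev_pos have "eventually (\<lambda>\<epsilon>. False) (at_right (0::real))"
    proof eventually_elim
      case (elim \<epsilon>)
      then interpret pp: prob_space "\<pi> \<epsilon>" by auto
      have "(\<Prod>j<k. Lf j) \<le> (\<Prod>j<k. measure (\<pi> \<epsilon>) (ball (X j) r \<times> ball (Y j) r))"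
        using elim Lf by (intro prod_mono) (auto intro: less_imp_le)
      also have "\<dots> \<le> exp ((- D + real (2 * k) * \<delta>) / \<epsilon>) * (\<Prod>j<k. measure (\<pi> \<epsilon>) (ball (X j) r \<times> ball (Y (sg k j)) r))"
        using rb elim by auto
      also have "\<dots> \<le> exp ((- D + real (2 * k) * \<delta>) / \<epsilon>) * 1"
        by (intro mult_left_mono prod_le_1) auto
      also have "\<dots> = exp (- D / (2 * \<epsilon>))" unfolding kd by simp
      finally show False using elim by simp
    qed
    then show False by (simp add: eventually_False)
  qed
qed

end

lemma rate_witness:
  assumes ch: "(n, xs, ys) \<in> chainsE G a b y"
  shows "ereal (c x0 b + chT c n xs ys - c x0 (ys n) - c a b) \<le> rate_I c G x0 b"
proof -
  define k where "k = Suc (Suc n)"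
  define XI where "XI j = (if j = 0 then x0 else xs (j - 1))" for j
  define YI where "YI j = (if j = 0 then b else ys (j - 1))" for j
  have mem: "(k, XI, YI, sg k) \<in> {(k, xs, ys, \<sigma>) | (k::nat) (xs::nat \<Rightarrow> 'a) (ys::nat \<Rightarrow> 'b) \<sigma>.
        k \<ge> 2 \<and> xs 0 = x0 \<and> ys 0 = b \<and> (\<forall>i\<in>{1..<k}. (xs i, ys i) \<in> G) \<and> \<sigma> permutes {..<k}}"
    using ch sg_permutes[of k] by (auto simp: k_def XI_def YI_def chainsE_def)
  have s1: "(\<Sum>j<k. c (XI j) (YI j)) = c x0 b + (\<Sum>i<Suc n. c (xs i) (ys i))"
    unfolding k_def by (subst sum.lessThan_Suc_shift) (simp add: XI_def YI_def)
  have s2: "(\<Sum>j<k. c (XI j) (YI (sg k j))) = c x0 (ys n) + (c a b + (\<Sum>i<n. c (xs (Suc i)) (ys i)))"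
  proof -
    have "(\<Sum>j<k. c (XI j) (YI (sg k j))) = c (XI 0) (YI (sg k 0)) + (\<Sum>i<Suc n. c (XI (Suc i)) (YI (sg k (Suc i))))"
      unfolding k_def by (subst sum.lessThan_Suc_shift) simp
    also have "(\<Sum>i<Suc n. c (XI (Suc i)) (YI (sg k (Suc i)))) = (\<Sum>i<Suc n. c (xs i) (YI i))"
      by (intro sum.cong) (auto simp: XI_def sg_def k_def)
    also have "\<dots> = c (xs 0) (YI 0) + (\<Sum>i<n. c (xs (Suc i)) (YI (Suc i)))"
      by (subst sum.lessThan_Suc_shift) simp
    finally show ?thesis using ch by (simp add: XI_def YI_def sg_def k_def chainsE_def)
  qed
  have "ereal (c x0 b + chT c n xs ys - c x0 (ys n) - c a b) =
      (case (k, XI, YI, sg k) of (k, xs, ys, \<sigma>) \<Rightarrow>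
        ereal ((\<Sum>i<k. c (xs i) (ys i)) - (\<Sum>i<k. c (xs i) (ys (\<sigma> i)))))"
    by (simp add: s1 s2 chT_def sum_subtractf)
  also have "\<dots> \<le> rate_I c G x0 b"
    unfolding rate_I_def by (rule SUP_upper[OF mem])
  finally show ?thesis .
qed

context setting
begin

lemma proj_null:
  fixes f :: "'a \<times> 'b \<Rightarrow> 'c::polish_space" and M0 :: "'c measure" and K :: "nat \<Rightarrow> ('a \<times> 'b) set"
  assumes pM: "prob_space M0" and sM: "sets M0 = sets borel"
    and dist: "distr \<pi>\<^sub>s M0 f = M0" and fm: "f \<in> measurable \<pi>\<^sub>s M0"
    and Kb: "\<And>n. measure \<pi>\<^sub>s (- K n) < 1 / Suc n" and Ks: "\<And>n. K n \<in> sets borel"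
    and fK: "\<And>n. f ` K n \<in> sets borel"
  shows "emeasure M0 (- (\<Union>n. f ` K n)) = 0"
proof -
  interpret M0: prob_space M0 by (rule pM)
  interpret ps: prob_space \<pi>\<^sub>s by (rule ps_facts(1))
  have spM: "space M0 = UNIV" using sets_eq_imp_space_eq[OF sM] by simp
  have spP: "space \<pi>\<^sub>s = UNIV" using sets_eq_imp_space_eq[OF ps_facts(2)] by simp
  have Fb: "- (\<Union>n. f ` K n) \<in> sets M0" using fK sM by auto
  have le: "measure M0 (- (\<Union>n. f ` K n)) < 1 / Suc n" for n
  proof -
    have "measure M0 (- (\<Union>n. f ` K n)) \<le> measure M0 (- (f ` K n))"
      using fK sM by (intro M0.finite_measure_mono) auto
    also have "measure M0 (- (f ` K n)) = measure (distr \<pi>\<^sub>s M0 f) (- (f ` K n))" using dist by simp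
    also have "\<dots> = measure \<pi>\<^sub>s (f -` (- (f ` K n)) \<inter> space \<pi>\<^sub>s)"
      using fm fK sM by (intro measure_distr) auto
    also have "\<dots> \<le> measure \<pi>\<^sub>s (- K n)"
      using Ks ps_facts(2) by (intro ps.finite_measure_mono) auto
    also have "\<dots> < 1 / Suc n" by (rule Kb)
    finally show ?thesis .
  qed
  have le0: "measure M0 (- (\<Union>n. f ` K n)) \<le> 0"
  proof (rule ccontr)
    assume "\<not> ?thesis"
    then have "measure M0 (- (\<Union>n. f ` K n)) > 0" by simp
    then obtain n where "1 / Suc n < measure M0 (- (\<Union>n. f ` K n))"
      using reals_Archimedean by (metis inverse_eq_divide)
    with le[of n] show False by simp
  qed
  have m0: "measure M0 (- (\<Union>n. f ` K n)) = 0"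
    using le0 measure_nonneg[of M0 "- (\<Union>n. f ` K n)"] by linarith
  show ?thesis by (simp only: M0.emeasure_eq_measure m0) simp
qed

lemma good_set: "\<exists>H. H \<in> sets borel \<and> H \<subseteq> fst ` msupport \<pi>\<^sub>s \<times> snd ` msupport \<pi>\<^sub>s \<and> - H \<in> null_sets (\<mu> \<Otimes>\<^sub>M \<nu>)"
proof -
  have Gb: "msupport \<pi>\<^sub>s \<in> sets borel" by (rule borel_closed[OF supp_closed])
  have null: "emeasure \<pi>\<^sub>s (- msupport \<pi>\<^sub>s) = 0" by (rule supp_full[OF ps_facts])
  have "\<forall>n. \<exists>K. compact K \<and> K \<subseteq> msupport \<pi>\<^sub>s \<and> measure \<pi>\<^sub>s (- K) < 1 / Suc n"
    using compact_approx[OF ps_facts Gb null] by simp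
  then have "\<exists>K. \<forall>n. compact (K n) \<and> K n \<subseteq> msupport \<pi>\<^sub>s \<and> measure \<pi>\<^sub>s (- K n) < 1 / Suc n"
    by (rule choice)
  then obtain K where K: "\<And>n. compact (K n)" "\<And>n. K n \<subseteq> msupport \<pi>\<^sub>s" "\<And>n. measure \<pi>\<^sub>s (- K n) < 1 / Suc n"
    by blast
  have Kb: "K n \<in> sets borel" for n using K(1) by (simp add: borel_closed compact_imp_closed)
  have cf: "compact (fst ` K n)" for n using K(1) by (intro compact_continuous_image continuous_intros)
  have cs: "compact (snd ` K n)" for n using K(1) by (intro compact_continuous_image continuous_intros)
  define F where "F = (\<Union>n. fst ` K n)"
  define G where "G = (\<Union>n. snd ` K n)"
  have fb: "fst ` K n \<in> sets borel" for n using cf by (simp add: borel_closed compact_imp_closed)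
  have sb: "snd ` K n \<in> sets borel" for n using cs by (simp add: borel_closed compact_imp_closed)
  have sps: "sets \<pi>\<^sub>s = sets (\<mu> \<Otimes>\<^sub>M \<nu>)" using coup by (simp add: coupling_def)
  have fm: "fst \<in> measurable \<pi>\<^sub>s \<mu>" using measurable_cong_sets[OF sps refl] measurable_fst by metis
  have sm: "snd \<in> measurable \<pi>\<^sub>s \<nu>" using measurable_cong_sets[OF sps refl] measurable_snd by metis
  have F0: "emeasure \<mu> (- F) = 0"
    unfolding F_def using coup fm K(3) Kb fb
    by (intro proj_null[OF p\<mu> s\<mu>]) (auto simp: coupling_def)
  have G0: "emeasure \<nu> (- G) = 0"
    unfolding G_def using coup sm K(3) Kb sb
    by (intro proj_null[OF p\<nu> s\<nu>]) (auto simp: coupling_def)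
  have Fs: "F \<in> sets \<mu>" using fb s\<mu> by (auto simp: F_def)
  have Gs: "G \<in> sets \<nu>" using sb s\<nu> by (auto simp: G_def)
  interpret nu: prob_space \<nu> by (rule p\<nu>)
  interpret mu: prob_space \<mu> by (rule p\<mu>)
  have spm: "space \<mu> = UNIV" using sets_eq_imp_space_eq[OF s\<mu>] by simp
  have spn: "space \<nu> = UNIV" using sets_eq_imp_space_eq[OF s\<nu>] by simp
  have cF: "- F \<in> sets \<mu>" using Fs sets.compl_sets[of F \<mu>] spm by (simp add: Compl_eq_Diff_UNIV)
  have cG: "- G \<in> sets \<nu>" using Gs sets.compl_sets[of G \<nu>] spn by (simp add: Compl_eq_Diff_UNIV)
  have U1: "UNIV \<in> sets \<mu>" using sets.top[of \<mu>] spm by simp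
  have U2: "UNIV \<in> sets \<nu>" using sets.top[of \<nu>] spn by simp
  have n1: "(- F) \<times> UNIV \<in> null_sets (\<mu> \<Otimes>\<^sub>M \<nu>)"
    by (rule nu.times_in_null_sets1) (use cF F0 U2 in \<open>auto simp: null_sets_def\<close>)
  have n2: "UNIV \<times> (- G) \<in> null_sets (\<mu> \<Otimes>\<^sub>M \<nu>)"
    by (rule nu.times_in_null_sets2) (use cG G0 U1 in \<open>auto simp: null_sets_def\<close>)
  have Hs: "- (F \<times> G) \<in> sets (\<mu> \<Otimes>\<^sub>M \<nu>)"
  proof -
    have "F \<times> G \<in> sets (\<mu> \<Otimes>\<^sub>M \<nu>)" using Fs Gs by simp
    then show ?thesis using sets.compl_sets[of "F \<times> G" "\<mu> \<Otimes>\<^sub>M \<nu>"] by (simp add: space_pair_measure spm spn Compl_eq_Diff_UNIV)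
  qed
  have "- (F \<times> G) \<in> null_sets (\<mu> \<Otimes>\<^sub>M \<nu>)"
    by (rule null_sets_subset[OF null_sets.Un[OF n1 n2] Hs]) auto
  moreover have "F \<times> G \<in> sets borel" using Fs Gs sets_prod' by (metis pair_measureI s\<mu> s\<nu> sets_pair_measure_cong)
  moreover have "F \<times> G \<subseteq> fst ` msupport \<pi>\<^sub>s \<times> snd ` msupport \<pi>\<^sub>s"
    using K(2) by (auto simp: F_def G_def)
  ultimately show ?thesis by blast
qed

end

context setting
begin

lemma compl_lower:
  assumes V: "open V" and UV: "U = V \<inter> (fst ` msupport \<pi>\<^sub>s \<times> snd ` msupport \<pi>\<^sub>s)"
    and SV: "S \<subseteq> V" and Sb: "S \<in> sets borel" and ep: "\<epsilon> > 0"
  shows "U \<in> sets (completion (\<pi> \<epsilon>))" "emeasure (\<pi> \<epsilon>) S \<le> emeasure (completion (\<pi> \<epsilon>)) U"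
proof -
  obtain H where H: "H \<in> sets borel" "H \<subseteq> fst ` msupport \<pi>\<^sub>s \<times> snd ` msupport \<pi>\<^sub>s" "- H \<in> null_sets (\<mu> \<Otimes>\<^sub>M \<nu>)"
    using good_set by blast
  have N: "- H \<in> null_sets (\<pi> \<epsilon>)" using pi_facts(3)[OF ep] H(3) unfolding absolutely_continuous_def by auto
  have sp: "sets (\<pi> \<epsilon>) = sets borel" by (rule pi_facts(2)[OF ep])
  have VH: "V \<inter> H \<in> sets (\<pi> \<epsilon>)" using V H(1) sp by (auto intro: borel_open)
  have Ueq: "U = (V \<inter> H) \<union> (U - H)" using UV H(2) by auto
  show Uc: "U \<in> sets (completion (\<pi> \<epsilon>))" by (rule sets_completionI[OF Ueq _ N VH]) auto
  have Ss: "S \<in> sets (\<pi> \<epsilon>)" using Sb sp by simp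
  have "emeasure (\<pi> \<epsilon>) S = emeasure (\<pi> \<epsilon>) (S - (- H))" using emeasure_Diff_null_set[OF N Ss] by simp
  also have "\<dots> \<le> emeasure (\<pi> \<epsilon>) (V \<inter> H)" by (rule emeasure_mono) (use SV VH in auto)
  also have "\<dots> = emeasure (completion (\<pi> \<epsilon>)) (V \<inter> H)" using VH by simp
  also have "\<dots> \<le> emeasure (completion (\<pi> \<epsilon>)) U" by (rule emeasure_mono) (use Ueq Uc in auto)
  finally show "emeasure (\<pi> \<epsilon>) S \<le> emeasure (completion (\<pi> \<epsilon>)) U" .
qed

lemma liminf_chain:
  fixes k :: nat and X :: "nat \<Rightarrow> 'a" and Y :: "nat \<Rightarrow> 'b"
  assumes k: "k \<ge> 1" and pts: "\<forall>j<k. (X j, Y j) \<in> msupport \<pi>\<^sub>s"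
    and op: "openin (top_of_set (fst ` msupport \<pi>\<^sub>s \<times> snd ` msupport \<pi>\<^sub>s)) U"
    and inU: "(X 0, Y (k - 1)) \<in> U"
  shows "ereal ((\<Sum>j<k. c (X j) (Y j)) - (\<Sum>j<k. c (X j) (Y (sg k j)))) \<le>
     Liminf (at_right 0) (\<lambda>\<epsilon>. ereal \<epsilon> * eln (emeasure (completion (\<pi> \<epsilon>)) U))"
proof -
  define D where "D = (\<Sum>j<k. c (X j) (Y j)) - (\<Sum>j<k. c (X j) (Y (sg k j)))"
  obtain V where V: "open V" "U = (fst ` msupport \<pi>\<^sub>s \<times> snd ` msupport \<pi>\<^sub>s) \<inter> V"
    using op openin_open by blast
  have UV: "U = V \<inter> (fst ` msupport \<pi>\<^sub>s \<times> snd ` msupport \<pi>\<^sub>s)" using V by auto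
  have inV: "(X 0, Y (k - 1)) \<in> V" using inU V by auto
  show ?thesis unfolding le_Liminf_iff D_def[symmetric]
  proof (intro allI impI)
    fix y assume "y < ereal D"
    then obtain t where yt: "y < ereal t" "t < D" using ereal_dense2 by (metis less_ereal.simps(1))
    define \<delta> where "\<delta> = (D - t) / (4 * k)"
    have dp: "\<delta> > 0" using yt k by (simp add: \<delta>_def)
    have kd: "(- D + real (2 * k) * \<delta>) / \<epsilon> = - (D + t) / (2 * \<epsilon>)" if "\<epsilon> > 0" for \<epsilon>
      using k that by (simp add: \<delta>_def field_simps)
    have "eventually (\<lambda>r. (\<forall>\<epsilon>>0. (\<Prod>j<k. measure (\<pi> \<epsilon>) (ball (X j) r \<times> ball (Y j) r)) \<le>
       exp ((- D + real (2 * k) * \<delta>) / \<epsilon>) * (\<Prod>j<k. measure (\<pi> \<epsilon>) (ball (X j) r \<times> ball (Y (sg k j)) r)))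
       \<and> ball (X 0) r \<times> ball (Y (k - 1)) r \<subseteq> V) (at_right 0)"
      using eventually_conj[OF loc_bound[OF k dp, of X Y] box_in_open[OF V(1) inV]] unfolding D_def .
    then obtain r where r: "r > 0" and rb: "\<forall>\<epsilon>>0. (\<Prod>j<k. measure (\<pi> \<epsilon>) (ball (X j) r \<times> ball (Y j) r)) \<le>
       exp ((- D + real (2 * k) * \<delta>) / \<epsilon>) * (\<Prod>j<k. measure (\<pi> \<epsilon>) (ball (X j) r \<times> ball (Y (sg k j)) r))"
      and rV: "ball (X 0) r \<times> ball (Y (k - 1)) r \<subseteq> V"
      using ev_pick by blast
    obtain Lf where Lf: "\<forall>j\<in>{..<k}. Lf j > 0"
      and ev1: "eventually (\<lambda>\<epsilon>. \<forall>j\<in>{..<k}. Lf j \<le> measure (\<pi> \<epsilon>) (ball (X j) r \<times> ball (Y j) r)) (at_right 0)"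
      using supp_box_lower[of _ "{..<k}" X Y r] pts r by auto
    define L where "L = (\<Prod>j<k. Lf j)"
    have Lp: "L > 0" using Lf unfolding L_def by (intro prod_pos) auto
    have hp: "(D - t) / 2 > 0" using yt by simp
    have ev3: "eventually (\<lambda>\<epsilon>. - ((D - t) / 2) < \<epsilon> * ln L) (at_right 0)"
      by (rule eps_ln_small[OF hp Lp])
    from ev1 ev3 ev_pi ev_pos show "eventually (\<lambda>\<epsilon>. y < ereal \<epsilon> * eln (emeasure (completion (\<pi> \<epsilon>)) U)) (at_right 0)"
    proof eventually_elim
      case (elim \<epsilon>)
      then interpret pp: prob_space "\<pi> \<epsilon>" by auto
      have ep: "\<epsilon> > 0" using elim by auto
      define m0 where "m0 = measure (\<pi> \<epsilon>) (ball (X 0) r \<times> ball (Y (k - 1)) r)"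
      have sg0: "sg k 0 = k - 1" by (simp add: sg_def)
      have k0: "0 \<in> {..<k}" using k by auto
      have "L \<le> (\<Prod>j<k. measure (\<pi> \<epsilon>) (ball (X j) r \<times> ball (Y j) r))"
        unfolding L_def using elim Lf by (intro prod_mono) (auto intro: less_imp_le)
      also have "\<dots> \<le> exp (- (D + t) / (2 * \<epsilon>)) * (\<Prod>j<k. measure (\<pi> \<epsilon>) (ball (X j) r \<times> ball (Y (sg k j)) r))"
        using rb ep kd[OF ep] by auto
      also have "(\<Prod>j<k. measure (\<pi> \<epsilon>) (ball (X j) r \<times> ball (Y (sg k j)) r)) \<le> m0"
      proof -
        have "(\<Prod>j<k. measure (\<pi> \<epsilon>) (ball (X j) r \<times> ball (Y (sg k j)) r)) =
            m0 * (\<Prod>j\<in>{..<k} - {0}. measure (\<pi> \<epsilon>) (ball (X j) r \<times> ball (Y (sg k j)) r))"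
          using prod.remove[OF finite_lessThan k0, of "\<lambda>j. measure (\<pi> \<epsilon>) (ball (X j) r \<times> ball (Y (sg k j)) r)"] sg0
          by (simp add: m0_def)
        also have "\<dots> \<le> m0 * 1" unfolding m0_def by (intro mult_left_mono prod_le_1) auto
        finally show ?thesis by simp
      qed
      then have "exp (- (D + t) / (2 * \<epsilon>)) * (\<Prod>j<k. measure (\<pi> \<epsilon>) (ball (X j) r \<times> ball (Y (sg k j)) r))
          \<le> exp (- (D + t) / (2 * \<epsilon>)) * m0" by (intro mult_left_mono) auto
      finally have Lm: "L \<le> exp (- (D + t) / (2 * \<epsilon>)) * m0" .
      have m0ge: "L * exp ((D + t) / (2 * \<epsilon>)) \<le> m0"
      proof -
        have "L * exp ((D + t) / (2 * \<epsilon>)) \<le> exp (- (D + t) / (2 * \<epsilon>)) * m0 * exp ((D + t) / (2 * \<epsilon>))"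
          using Lm by (intro mult_right_mono) auto
        also have "\<dots> = m0 * (exp (- (D + t) / (2 * \<epsilon>)) * exp ((D + t) / (2 * \<epsilon>)))" by simp
        also have "exp (- (D + t) / (2 * \<epsilon>)) * exp ((D + t) / (2 * \<epsilon>)) = 1"
          by (simp add: exp_add[symmetric] add_divide_distrib[symmetric])
        finally show ?thesis by simp
      qed
      have m0p: "m0 > 0" using m0ge Lp by (smt (verit) exp_gt_zero mult_pos_pos)
      have boxb: "ball (X 0) r \<times> ball (Y (k - 1)) r \<in> sets borel" by (rule box_borel)
      have Uc: "U \<in> sets (completion (\<pi> \<epsilon>))" by (rule compl_lower(1)[OF V(1) UV rV boxb ep])
      have Mge: "ennreal m0 \<le> emeasure (completion (\<pi> \<epsilon>)) U"
        using compl_lower(2)[OF V(1) UV rV boxb ep] unfolding m0_def by (simp add: pp.emeasure_eq_measure)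
      have Mle: "emeasure (completion (\<pi> \<epsilon>)) U \<le> 1"
        using Uc by (simp add: pp.emeasure_le_1)
      define Mr where "Mr = enn2real (emeasure (completion (\<pi> \<epsilon>)) U)"
      have ntop: "emeasure (completion (\<pi> \<epsilon>)) U \<noteq> \<top>" using Mle by (auto simp: top_unique)
      have Meq: "emeasure (completion (\<pi> \<epsilon>)) U = ennreal Mr"
        unfolding Mr_def using ntop by (intro ennreal_enn2real[symmetric]) (simp add: less_top)
      have Mr0: "Mr \<ge> 0" by (simp add: Mr_def)
      have m0Mr: "m0 \<le> Mr" using Mge Meq Mr0 by (simp add: ennreal_le_iff)
      have nz: "emeasure (completion (\<pi> \<epsilon>)) U \<noteq> 0" using Mge m0p
        by (metis ennreal_eq_0_iff leD le_zero_eq not_less)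
      have eln_eq: "eln (emeasure (completion (\<pi> \<epsilon>)) U) = ereal (ln Mr)"
        unfolding eln_def using nz ntop Mr_def by simp
      have "ln L + (D + t) / (2 * \<epsilon>) = ln (L * exp ((D + t) / (2 * \<epsilon>)))"
        using Lp by (simp add: ln_mult)
      also have "\<dots> \<le> ln Mr" using m0ge m0Mr Lp by (intro ln_mono) auto
      finally have lnb: "ln L + (D + t) / (2 * \<epsilon>) \<le> ln Mr" .
      have f1: "\<epsilon> * (ln L + (D + t) / (2 * \<epsilon>)) \<le> \<epsilon> * ln Mr" using lnb ep by (intro mult_left_mono) auto
      have f2: "\<epsilon> * (ln L + (D + t) / (2 * \<epsilon>)) = \<epsilon> * ln L + (D + t) / 2"
        using ep by (simp add: field_simps)
      have f3: "- ((D - t) / 2) < \<epsilon> * ln L" using elim by blast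
      have f4: "\<epsilon> * ln L + (D + t) / 2 \<le> \<epsilon> * ln Mr" using f1 unfolding f2 .
      have f5: "- ((D - t) / 2) + (D + t) / 2 = t" by (simp add: field_simps)
      have "t < \<epsilon> * ln Mr" using f3 f4 f5 by (smt (verit))
      then have "ereal t < ereal \<epsilon> * eln (emeasure (completion (\<pi> \<epsilon>)) U)"
        unfolding eln_eq by simp
      then show ?case using yt(1) by (rule order.strict_trans[rotated])
    qed
  qed
qed

end

lemma ereal_fin: "ereal r1 \<le> e \<Longrightarrow> e \<le> ereal r2 \<Longrightarrow> e = ereal (real_of_ereal e)"
  by (cases e) auto

context setting
begin

lemma final_point:
  assumes uniq: "\<And>\<psi>1 \<psi>2. c_convex c \<psi>1 \<Longrightarrow> c_convex c \<psi>2 \<Longrightarrow>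
           msupport \<pi>\<^sub>s \<subseteq> c_subdiff c \<psi>1 \<Longrightarrow> msupport \<pi>\<^sub>s \<subseteq> c_subdiff c \<psi>2 \<Longrightarrow>
           \<exists>C::real. \<forall>x \<in> fst ` msupport \<pi>\<^sub>s. \<psi>1 x - \<psi>2 x = ereal C"
    and op: "openin (top_of_set (fst ` msupport \<pi>\<^sub>s \<times> snd ` msupport \<pi>\<^sub>s)) U"
    and z: "(xb, yb) \<in> U"
  shows "- rate_I c (msupport \<pi>\<^sub>s) xb yb \<le> Liminf (at_right 0) (\<lambda>\<epsilon>. ereal \<epsilon> * eln (emeasure (completion (\<pi> \<epsilon>)) U))"
proof -
  define G where "G = msupport \<pi>\<^sub>s"
  define Lim where "Lim = Liminf (at_right 0) (\<lambda>\<epsilon>. ereal \<epsilon> * eln (emeasure (completion (\<pi> \<epsilon>)) U))"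
  define R where "R = rate_I c G xb yb"
  have "U \<subseteq> fst ` G \<times> snd ` G" using openin_subset[OF op] by (simp add: G_def)
  with z obtain yh xh where g1: "(xb, yh) \<in> G" and g2: "(xh, yb) \<in> G" by force
  have cm: "CM c G" unfolding G_def by (rule CM_Gamma)
  define PA where "PA = Psi c G xh yb"
  define PB where "PB = Psi c G xb yh"
  have cA: "c_convex c PA" unfolding PA_def by (rule Psi_c_convex[OF g2 cm])
  have cB: "c_convex c PB" unfolding PB_def by (rule Psi_c_convex[OF g1 cm])
  have sA: "msupport \<pi>\<^sub>s \<subseteq> c_subdiff c PA" using Psi_subdiff[OF g2 cm] by (simp add: PA_def G_def)
  have sB: "msupport \<pi>\<^sub>s \<subseteq> c_subdiff c PB" using Psi_subdiff[OF g1 cm] by (simp add: PB_def G_def)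
  obtain C where C: "\<forall>x\<in>fst ` G. PA x - PB x = ereal C"
    using uniq[OF cA cB sA sB] unfolding G_def by blast
  have A0: "PA xh = 0" unfolding PA_def by (rule Psi_anchor[OF g2 cm])
  have B0: "PB xb = 0" unfolding PB_def by (rule Psi_anchor[OF g1 cm])
  define a1 where "a1 = real_of_ereal (PA xb)"
  define b2 where "b2 = real_of_ereal (PB xh)"
  have PAa: "PA xb = ereal a1"
    unfolding a1_def PA_def by (rule ereal_fin[OF Psi_ge[OF g2 cm] Psi_le[OF g2 cm g1]])
  have PBb: "PB xh = ereal b2"
    unfolding b2_def PB_def by (rule ereal_fin[OF Psi_ge[OF g1 cm] Psi_le[OF g1 cm g2]])
  have xbG: "xb \<in> fst ` G" using g1 by force
  have xhG: "xh \<in> fst ` G" using g2 by force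
  have "ereal a1 - 0 = ereal C" using C xbG PAa B0 by auto
  moreover have "0 - ereal b2 = ereal C" using C xhG PBb A0 by auto
  ultimately have hab: "b2 = - a1" by simp
  define d where "d = c xb yb - c xh yb"
  have claim1: "PA xb \<le> R + ereal (- d)"
    unfolding PA_def Psi_def
  proof (rule SUP_least)
    fix y
    have "zeta c G xh yb y \<le> R + ereal (- d + c xb y)"
      unfolding zeta_def
    proof (rule SUP_least)
      fix t assume t: "t \<in> chainsE G xh yb y"
      obtain n xs ys where tt: "t = (n, xs, ys)" by (cases t)
      have w: "ereal (c xb yb + chT c n xs ys - c xb (ys n) - c xh yb) \<le> R"
        unfolding R_def by (rule rate_witness) (use t tt in simp)
      have "ys n = y" using t tt by (simp add: chainsE_def)
      then show "ereal (case t of (n, xs, ys) \<Rightarrow> chT c n xs ys) \<le> R + ereal (- d + c xb y)"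
        using w unfolding tt d_def by (cases R) auto
    qed
    then show "zeta c G xh yb y - ereal (c xb y) \<le> R + ereal (- d)"
      by (cases "zeta c G xh yb y"; cases R) auto
  qed
  then have c1: "ereal (a1 + d) \<le> R" using PAa by (cases R) auto
  have claim2: "PB xh \<le> Lim + ereal d"
    unfolding PB_def Psi_def
  proof (rule SUP_least)
    fix y
    have "zeta c G xb yh y \<le> Lim + ereal (d + c xh y)"
      unfolding zeta_def
    proof (rule SUP_least)
      fix t assume t: "t \<in> chainsE G xb yh y"
      obtain n xs ys where tt: "t = (n, xs, ys)" by (cases t)
      have ch: "xs 0 = xb" "ys n = y" "\<forall>i\<le>n. (xs i, ys i) \<in> G" using t tt by (auto simp: chainsE_def)
      define X where "X = (\<lambda>j. if j \<le> n then xs j else xh)"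
      define Y where "Y = (\<lambda>j. if j \<le> n then ys j else yb)"
      have pts: "\<forall>j<Suc (Suc n). (X j, Y j) \<in> msupport \<pi>\<^sub>s"
        using ch g2 unfolding G_def by (auto simp: X_def Y_def less_Suc_eq_le)
      have inU: "(X 0, Y (Suc (Suc n) - 1)) \<in> U" using z ch by (simp add: X_def Y_def)
      have lc: "ereal ((\<Sum>j<Suc (Suc n). c (X j) (Y j)) - (\<Sum>j<Suc (Suc n). c (X j) (Y (sg (Suc (Suc n)) j)))) \<le> Lim"
        unfolding Lim_def by (rule liminf_chain[OF _ pts op inU]) simp
      have es: "(\<Sum>j<Suc (Suc n). c (X j) (Y j)) - (\<Sum>j<Suc (Suc n). c (X j) (Y (sg (Suc (Suc n)) j)))
          = chT c n xs ys - c xh (ys n) + c xh yb - c (xs 0) yb"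
        unfolding X_def Y_def by (rule ext_sum)
      have "ereal (chT c n xs ys - c xh y + c xh yb - c xb yb) \<le> Lim" using lc es ch by simp
      then show "ereal (case t of (n, xs, ys) \<Rightarrow> chT c n xs ys) \<le> Lim + ereal (d + c xh y)"
        unfolding tt d_def by (cases Lim) auto
    qed
    then show "zeta c G xb yh y - ereal (c xh y) \<le> Lim + ereal d"
      by (cases "zeta c G xb yh y"; cases Lim) auto
  qed
  then have c2: "ereal (b2 - d) \<le> Lim" using PBb by (cases Lim) auto
  have "- R \<le> ereal (- (a1 + d))" using c1 by (cases R) auto
  also have "ereal (- (a1 + d)) = ereal (b2 - d)" using hab by simp
  also have "\<dots> \<le> Lim" by (rule c2)
  finally show ?thesis unfolding R_def Lim_def G_def .
qed

end

theorem corollary4p7: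
  fixes \<mu> :: "'a::polish_space measure" and \<nu> :: "'b::polish_space measure"
    and c :: "'a \<Rightarrow> 'b \<Rightarrow> real"
    and \<pi> :: "real \<Rightarrow> ('a \<times> 'b) measure" and \<pi>\<^sub>s :: "('a \<times> 'b) measure"
    and U :: "('a \<times> 'b) set"
  assumes "prob_space \<mu>" "sets \<mu> = sets borel"
    and "prob_space \<nu>" "sets \<nu> = sets borel"
    and "continuous_on UNIV (\<lambda>(x, y). c x y)" "\<And>x y. c x y \<ge> 0"
    and "\<And>\<epsilon>. \<epsilon> > 0 \<Longrightarrow> cyc_inv_coupling c \<epsilon> \<mu> \<nu> (\<pi> \<epsilon>)"
    and "coupling \<mu> \<nu> \<pi>\<^sub>s"
    and "weak_conv_filter \<pi> \<pi>\<^sub>s (at_right 0)"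
    and "\<And>\<psi>1 \<psi>2. c_convex c \<psi>1 \<Longrightarrow> c_convex c \<psi>2 \<Longrightarrow>
           msupport \<pi>\<^sub>s \<subseteq> c_subdiff c \<psi>1 \<Longrightarrow> msupport \<pi>\<^sub>s \<subseteq> c_subdiff c \<psi>2 \<Longrightarrow>
           \<exists>C::real. \<forall>x \<in> fst ` msupport \<pi>\<^sub>s. \<psi>1 x - \<psi>2 x = ereal C"
    and "openin (top_of_set (fst ` msupport \<pi>\<^sub>s \<times> snd ` msupport \<pi>\<^sub>s)) U"
  shows "Liminf (at_right 0) (\<lambda>\<epsilon>. ereal \<epsilon> * eln (emeasure (completion (\<pi> \<epsilon>)) U))
           \<ge> - (INF z \<in> U. rate_I c (msupport \<pi>\<^sub>s) (fst z) (snd z))"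
proof -
  interpret S: setting \<mu> \<nu> c \<pi> \<pi>\<^sub>s
    by (rule setting.intro[OF assms(1-5) assms(7-9)])
  have pt: "- rate_I c (msupport \<pi>\<^sub>s) (fst z) (snd z) \<le>
      Liminf (at_right 0) (\<lambda>\<epsilon>. ereal \<epsilon> * eln (emeasure (completion (\<pi> \<epsilon>)) U))" if "z \<in> U" for z
    by (rule S.final_point[OF assms(10) assms(11)]) (use that in auto)
  have "- Liminf (at_right 0) (\<lambda>\<epsilon>. ereal \<epsilon> * eln (emeasure (completion (\<pi> \<epsilon>)) U))
      \<le> (INF z \<in> U. rate_I c (msupport \<pi>\<^sub>s) (fst z) (snd z))"
  proof (rule INF_greatest)
    fix z assume "z \<in> U"
    from pt[OF this] show "- Liminf (at_right 0) (\<lambda>\<epsilon>. ereal \<epsilon> * eln (emeasure (completion (\<pi> \<epsilon>)) U))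
        \<le> rate_I c (msupport \<pi>\<^sub>s) (fst z) (snd z)"
      by (simp add: ereal_uminus_le_reorder)
  qed
  then show ?thesis by (simp add: ereal_uminus_le_reorder)
qed


end
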